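(* Let $\alpha$ be a quadratic algebraic unit which is not a root of unity, and let $J$ be a nonzero ideal in $\mathbb{Z}[\alpha]$. Let $A$ be the automorphism of $J\cong\mathbb{Z}^2$ given by multiplication by $\alpha$, and let $\pi=J\rtimes_A\mathbb{Z}$. Then (1) $\pi$ is a $\mathbb{S}ol^3$-group; (2) the groups corresponding to two such pairs $(\alpha,J)$ and $(\beta,K)$ are isomorphic if and only if either $\beta=\alpha$ or $\beta=\alpha^{-1}$ and $[K]=[J]$, or $\beta=\bar\alpha$ or $\beta=\bar\alpha^{-1}$ and $[K]=\overline{[J]}$; (3) given $\alpha$, the number of isomorphism classes of such groups $\pi$ is finite.
   Context: A $\mathbb{S}ol^3$-group is the fundamental group of a closed $\mathbb{S}ol^3$-manifold. $\bar\alpha$ denotes the Galois conjugate of $\alpha$ in the quadratic field $\mathbb{Q}[\alpha]$; the Galois involution preserves $\mathbb{Z}[\alpha]$ and hence acts on ideals and ideal classes. $[J]$ denotes the isomorphism class of $J$ as a $\mathbb{Z}[\alpha]$-module (ideal class), and $\overline{[J]}$ its Galois conjugate. *)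

theory Defs
  imports "HOL-Analysis.Analysis" "HOL-Algebra.Group"
begin

type_synonym sol_pt = "real \<times> real \<times> real"

definition sol_length :: "(real \<Rightarrow> sol_pt) \<Rightarrow> real" where
  "sol_length g = integral {0..1} (\<lambda>t.
     let v = vector_derivative g (at t within {0..1}); z = snd (snd (g t)) in
     sqrt (exp (2 * z) * (fst v)\<^sup>2 + exp (- 2 * z) * (fst (snd v))\<^sup>2 + (snd (snd v))\<^sup>2))"

definition sol_dist :: "sol_pt \<Rightarrow> sol_pt \<Rightarrow> real" where
  "sol_dist p q = Inf {sol_length g | g. g C1_differentiable_on {0..1} \<and> g 0 = p \<and> g 1 = q}"

definition sol_isometry :: "(sol_pt \<Rightarrow> sol_pt) \<Rightarrow> bool" where
  "sol_isometry f \<longleftrightarrow> bij f \<and> (\<forall>p q. sol_dist (f p) (f q) = sol_dist p q)"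

definition transf_group :: "(sol_pt \<Rightarrow> sol_pt) set \<Rightarrow> (sol_pt \<Rightarrow> sol_pt) monoid" where
  "transf_group \<Gamma> = \<lparr>carrier = \<Gamma>, monoid.mult = (\<circ>), one = id\<rparr>"

text \<open>A closed Sol^3-manifold is a quotient Sol/Gamma by a group Gamma of isometries
  acting freely and properly discontinuously with compact quotient; since Sol is
  simply connected its fundamental group is Gamma.\<close>
definition sol3_group :: "('g, 'b) monoid_scheme \<Rightarrow> bool" where
  "sol3_group G \<longleftrightarrow> group G \<and> (\<exists>\<Gamma>.
     (\<forall>f\<in>\<Gamma>. sol_isometry f) \<and> group (transf_group \<Gamma>) \<and>
     (\<forall>f\<in>\<Gamma>. \<forall>p. f p = p \<longrightarrow> f = id) \<and>
     (\<forall>K. compact K \<longrightarrow> finite {f\<in>\<Gamma>. f ` K \<inter> K \<noteq> {}}) \<and>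
     (\<exists>K. compact K \<and> (\<Union>f\<in>\<Gamma>. f ` K) = UNIV) \<and>
     G \<cong> transf_group \<Gamma>)"

text \<open>alpha is a (real) quadratic algebraic unit: root of a monic integer polynomial
  x^2 - t x + n with n = +-1, and of degree exactly 2 over Q (i.e. irrational).\<close>
definition quadratic_unit :: "real \<Rightarrow> bool" where
  "quadratic_unit a \<longleftrightarrow> a \<notin> \<rat> \<and>
     (\<exists>t n :: int. (n = 1 \<or> n = -1) \<and> a\<^sup>2 - of_int t * a + of_int n = 0)"

definition root_of_unity :: "real \<Rightarrow> bool" where
  "root_of_unity a \<longleftrightarrow> (\<exists>k::nat. k > 0 \<and> a ^ k = 1)"

definition Zring :: "real \<Rightarrow> real set" where
  "Zring a = {poly (map_poly of_int p) a | p :: int poly. True}"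

definition is_ideal :: "real \<Rightarrow> real set \<Rightarrow> bool" where
  "is_ideal a J \<longleftrightarrow> J \<subseteq> Zring a \<and> 0 \<in> J \<and>
     (\<forall>x\<in>J. \<forall>y\<in>J. x + y \<in> J) \<and> (\<forall>x\<in>J. - x \<in> J) \<and>
     (\<forall>r\<in>Zring a. \<forall>x\<in>J. r * x \<in> J)"

definition nonzero_ideal :: "real \<Rightarrow> real set \<Rightarrow> bool" where
  "nonzero_ideal a J \<longleftrightarrow> is_ideal a J \<and> J \<noteq> {0}"

definition gconj :: "real \<Rightarrow> real" where
  "gconj a = (THE b. b \<noteq> a \<and> (\<exists>t n :: int. a\<^sup>2 - of_int t * a + of_int n = 0
                                  \<and> b\<^sup>2 - of_int t * b + of_int n = 0))"

definition gal :: "real \<Rightarrow> real \<Rightarrow> real" where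
  "gal a x = (SOME y. \<exists>p :: int poly. x = poly (map_poly of_int p) a \<and>
                                      y = poly (map_poly of_int p) (gconj a))"

text \<open>[J] = [K]: J and K are isomorphic as Z[alpha]-modules.\<close>
definition same_class :: "real \<Rightarrow> real set \<Rightarrow> real set \<Rightarrow> bool" where
  "same_class a J K \<longleftrightarrow> (\<exists>f. bij_betw f J K \<and>
     (\<forall>x\<in>J. \<forall>y\<in>J. f (x + y) = f x + f y) \<and>
     (\<forall>r\<in>Zring a. \<forall>x\<in>J. f (r * x) = r * f x))"

definition sdp :: "real \<Rightarrow> real set \<Rightarrow> (real \<times> int) monoid" where
  "sdp a J = \<lparr>carrier = J \<times> UNIV,
              monoid.mult = (\<lambda>(j, m) (k, n). (j + a powi m * k, m + n)),
              one = (0, 0)\<rparr>"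

end

theory Submission
  imports Defs
begin

locale qu =
  fixes a :: real and t n :: int
  assumes irr: "a \<notin> \<rat>"
    and eq: "a\<^sup>2 - of_int t * a + of_int n = 0"
    and nsq: "n = 1 \<or> n = -1"
begin

lemma asq: "a * a = of_int t * a - of_int n"
  using eq by (simp add: power2_eq_square algebra_simps)

lemma coef_eq:
  assumes "of_int p + of_int q * a = of_int p' + of_int q' * a"
  shows "p = p' \<and> q = q'"
proof (cases "q = q'")
  case True thus ?thesis using assms by simp
next
  case False
  hence "a = of_int (p - p') / of_int (q' - q)" using assms
    by (simp add: field_simps)
  hence "a \<in> \<rat>" by simp
  thus ?thesis using irr by simp
qed

lemma coef_zero:
  assumes "of_int p + of_int q * a = 0" shows "p = 0 \<and> q = 0"
  using coef_eq[of p q 0 0] assms by simp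

definition ac :: real where "ac = of_int t - a"

lemma ac_sq: "ac * ac = of_int t * ac - of_int n"
  unfolding ac_def using asq by (simp add: algebra_simps)

lemma a_ac: "a * ac = of_int n"
  unfolding ac_def using asq by (simp add: algebra_simps)

lemma n_sq: "of_int n * (of_int n :: real) = 1"
  using nsq by auto

lemma a_nz: "a \<noteq> 0" using irr by auto
lemma ac_nz: "ac \<noteq> 0" using a_ac nsq by auto
lemma ac_ne: "ac \<noteq> a"
proof
  assume "ac = a"
  hence "a = of_int t / 2" unfolding ac_def by (simp add: field_simps)
  hence "a \<in> \<rat>" by (metis Rats_divide Rats_of_int Rats_number_of)
  thus False using irr by simp
qed

lemma abs_a_ne1: "\<bar>a\<bar> \<noteq> 1"
proof
  assume "\<bar>a\<bar> = 1"
  hence "a = 1 \<or> a = -1" by auto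
  thus False using irr by auto
qed

lemma inv_a: "inverse a = of_int n * ac"
  using a_ac n_sq a_nz by (simp add: field_simps) (metis mult.assoc mult.commute mult.left_commute)

lemma inv_ac: "inverse ac = of_int n * a"
  using a_ac n_sq ac_nz by (simp add: field_simps) (metis mult.assoc mult.commute mult.left_commute)

lemma poly_red: "\<exists>p q. poly (map_poly of_int P) a = of_int p + of_int q * a
     \<and> poly (map_poly of_int P) ac = of_int p + of_int q * ac"
proof (induction P)
  case 0 thus ?case by (intro exI[of _ 0]) simp
next
  case (pCons c P)
  then obtain p q where h: "poly (map_poly of_int P) a = of_int p + of_int q * a"
     "poly (map_poly of_int P) ac = of_int p + of_int q * ac" by blast
  have m: "map_poly (of_int::int\<Rightarrow>real) (pCons c P) = pCons (of_int c) (map_poly of_int P)"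
    by (simp add: map_poly_pCons)
  show ?case
    apply (rule exI[of _ "c - n * q"], rule exI[of _ "p + t * q"])
    using h asq ac_sq unfolding m by simp algebra
qed

lemma Zring_eq: "Zring a = {of_int p + of_int q * a | p q. True}"
proof (intro equalityI subsetI)
  fix x assume "x \<in> Zring a"
  then obtain P where "x = poly (map_poly of_int P) a" unfolding Zring_def by auto
  thus "x \<in> {of_int p + of_int q * a | p q. True}" using poly_red[of P] by auto
next
  fix x assume "x \<in> {of_int p + of_int q * a | p q. True}"
  then obtain p q where x: "x = of_int p + of_int q * a" by auto
  have "poly (map_poly of_int [:p, q:]) a = x" using x by (simp add: map_poly_pCons)
  thus "x \<in> Zring a" unfolding Zring_def by blast
qed

lemma ZringI: "of_int p + of_int q * a \<in> Zring a"
  unfolding Zring_eq by blast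

lemma ZringE:
  assumes "x \<in> Zring a" obtains p q where "x = of_int p + of_int q * a"
  using assms unfolding Zring_eq by blast

lemma gconj_eq: "gconj a = ac"
  unfolding gconj_def
proof (rule the_equality)
  show "ac \<noteq> a \<and> (\<exists>t' n'::int. a\<^sup>2 - of_int t' * a + of_int n' = 0 \<and> ac\<^sup>2 - of_int t' * ac + of_int n' = 0)"
    using ac_ne eq ac_sq by (intro conjI exI[of _ t] exI[of _ n]) (auto simp: power2_eq_square)
next
  fix b assume "b \<noteq> a \<and> (\<exists>t' n'::int. a\<^sup>2 - of_int t' * a + of_int n' = 0 \<and> b\<^sup>2 - of_int t' * b + of_int n' = 0)"
  then obtain t' n' :: int where b: "b \<noteq> a" "a\<^sup>2 - of_int t' * a + of_int n' = 0"
     "b\<^sup>2 - of_int t' * b + of_int n' = 0" by blast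
  have ce: "of_int (-n') + of_int t' * a = of_int (-n) + of_int t * a"
    using b(2) eq by (simp add: algebra_simps power2_eq_square)
  have tt: "t' = t" "n' = n" using coef_eq[OF ce] by auto
  have "(b - a) * (b + a - of_int t) = 0"
    using b(3) eq tt by (simp add: power2_eq_square algebra_simps)
  thus "b = ac" using b(1) unfolding ac_def by simp
qed

lemma gal_eq: "gal a (of_int p + of_int q * a) = of_int p + of_int q * ac"
proof -
  have "\<exists>P::int poly. of_int p + of_int q * a = poly (map_poly of_int P) a \<and>
          of_int p + of_int q * ac = poly (map_poly of_int P) (gconj a)"
    by (intro exI[of _ "[:p, q:]"]) (simp add: map_poly_pCons gconj_eq)
  then have "\<exists>y. \<exists>P::int poly. of_int p + of_int q * a = poly (map_poly of_int P) a \<and>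
          y = poly (map_poly of_int P) (gconj a)" by blast
  then have "\<exists>P::int poly. of_int p + of_int q * a = poly (map_poly of_int P) a \<and>
          gal a (of_int p + of_int q * a) = poly (map_poly of_int P) (gconj a)"
    unfolding gal_def by (rule someI_ex)
  then obtain P :: "int poly" where P: "of_int p + of_int q * a = poly (map_poly of_int P) a"
     "gal a (of_int p + of_int q * a) = poly (map_poly of_int P) ac" by (auto simp: gconj_eq)
  obtain p' q' where pq: "poly (map_poly of_int P) a = of_int p' + of_int q' * a"
     "poly (map_poly of_int P) ac = of_int p' + of_int q' * ac" using poly_red by blast
  have "p = p' \<and> q = q'" using P(1) pq(1) coef_eq by simp
  thus ?thesis using P(2) pq(2) by simp
qed

lemma Zring_add: "x \<in> Zring a \<Longrightarrow> y \<in> Zring a \<Longrightarrow> x + y \<in> Zring a"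
proof (elim ZringE)
  fix p q p' q' assume "x = of_int p + of_int q * a" "y = of_int p' + of_int q' * a"
  hence "x + y = of_int (p + p') + of_int (q + q') * a" by (simp add: algebra_simps)
  thus ?thesis by (simp only: ZringI)
qed

lemma Zring_mult: "x \<in> Zring a \<Longrightarrow> y \<in> Zring a \<Longrightarrow> x * y \<in> Zring a"
proof (elim ZringE)
  fix p q p' q' assume "x = of_int p + of_int q * a" "y = of_int p' + of_int q' * a"
  hence "x * y = of_int p * of_int p' + (of_int p * of_int q' + of_int q * of_int p') * a + of_int q * of_int q' * (a*a)"
    by (simp add: algebra_simps)
  also have "\<dots> = of_int (p*p' - n*q*q') + of_int (p*q' + q*p' + t*q*q') * a"
    unfolding asq by (simp add: algebra_simps)
  finally have "x * y = of_int (p*p' - n*q*q') + of_int (p*q' + q*p' + t*q*q') * a" .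
  thus ?thesis using ZringI[of "p*p' - n*q*q'" "p*q' + q*p' + t*q*q'"] by simp
qed

lemma Zring_neg: "x \<in> Zring a \<Longrightarrow> - x \<in> Zring a"
proof (elim ZringE)
  fix p q assume "x = of_int p + of_int q * a"
  hence "- x = of_int (- p) + of_int (- q) * a" by simp
  thus ?thesis by (simp only: ZringI)
qed

lemma Zring_int: "of_int k \<in> Zring a"
  using ZringI[of k 0] by simp

lemma Zring_a: "a \<in> Zring a"
  using ZringI[of 0 1] by simp

lemma Zring_ac: "ac \<in> Zring a"
  using ZringI[of t "-1"] unfolding ac_def by simp

lemma Zring_diff: "x \<in> Zring a \<Longrightarrow> y \<in> Zring a \<Longrightarrow> x - y \<in> Zring a"
  using Zring_add Zring_neg by (metis diff_conv_add_uminus)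

lemma Zring_inva: "inverse a \<in> Zring a"
  using inv_a Zring_mult Zring_int Zring_ac by simp

lemma Zring_pow: "a ^ k \<in> Zring a"
  by (induction k) (auto intro: Zring_mult Zring_a simp: Zring_int[of 1, simplified])

lemma Zring_powi: "a powi m \<in> Zring a"
proof (cases "m \<ge> 0")
  case True thus ?thesis using Zring_pow by (simp add: power_int_def)
next
  case False
  hence "a powi m = inverse a ^ nat (-m)" by (simp add: power_int_def power_inverse)
  moreover have "inverse a ^ k \<in> Zring a" for k
    by (induction k) (auto intro: Zring_mult Zring_inva simp: Zring_int[of 1, simplified])
  ultimately show ?thesis by simp
qed


lemma mult_form:
  assumes "z * z = of_int t * z - of_int n"
  shows "(of_int p + of_int q * z) * (of_int p' + of_int q' * z) =
     of_int (p*p' - n*q*q') + of_int (p*q' + q*p' + t*q*q') * (z::real)"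
proof -
  have "(of_int p + of_int q * z) * (of_int p' + of_int q' * z) = of_int p * of_int p' + (of_int p * of_int q' + of_int q * of_int p') * z + of_int q * of_int q' * (z*z)"
    by (simp add: algebra_simps)
  also have "\<dots> = of_int (p*p' - n*q*q') + of_int (p*q' + q*p' + t*q*q') * z"
    unfolding assms by (simp add: algebra_simps)
  finally show ?thesis .
qed

lemma ac_form: "of_int p + of_int q * ac = of_int (p + q*t) + of_int (-q) * a"
  unfolding ac_def by (simp add: algebra_simps)

lemma gal_Zring: "x \<in> Zring a \<Longrightarrow> gal a x \<in> Zring a"
  by (elim ZringE) (simp only: gal_eq ac_form ZringI)

lemma gal_add: "x \<in> Zring a \<Longrightarrow> y \<in> Zring a \<Longrightarrow> gal a (x + y) = gal a x + gal a y"
proof (elim ZringE)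
  fix p q p' q' assume h: "x = of_int p + of_int q * a" "y = of_int p' + of_int q' * a"
  hence "x + y = of_int (p + p') + of_int (q + q') * a" by (simp add: algebra_simps)
  thus ?thesis using h by (simp only: gal_eq) (simp add: algebra_simps)
qed

lemma gal_mult: "x \<in> Zring a \<Longrightarrow> y \<in> Zring a \<Longrightarrow> gal a (x * y) = gal a x * gal a y"
proof (elim ZringE)
  fix p q p' q' assume h: "x = of_int p + of_int q * a" "y = of_int p' + of_int q' * a"
  hence "x * y = of_int (p*p' - n*q*q') + of_int (p*q' + q*p' + t*q*q') * a"
    using mult_form[OF asq] by simp
  thus ?thesis using h mult_form[OF ac_sq, of p q p' q'] by (simp only: gal_eq)
qed

lemma gal_neg: "x \<in> Zring a \<Longrightarrow> gal a (- x) = - gal a x"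
proof (elim ZringE)
  fix p q assume h: "x = of_int p + of_int q * a"
  hence "- x = of_int (- p) + of_int (- q) * a" by simp
  thus ?thesis using h by (simp only: gal_eq) simp?
qed

lemma gal_int: "gal a (of_int k) = of_int k"
  using gal_eq[of k 0] by simp

lemma gal_a: "gal a a = ac"
  using gal_eq[of 0 1] by simp

lemma gal_ac: "gal a ac = a"
  using gal_eq[of t "-1"] unfolding ac_def by simp

lemma gal_gal: "x \<in> Zring a \<Longrightarrow> gal a (gal a x) = x"
proof (elim ZringE)
  fix p q assume h: "x = of_int p + of_int q * a"
  show ?thesis unfolding h gal_eq ac_form by (simp add: ac_def algebra_simps)
qed

lemma gal_nz: "x \<in> Zring a \<Longrightarrow> x \<noteq> 0 \<Longrightarrow> gal a x \<noteq> 0"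
  using gal_gal gal_int[of 0] by force

lemma gal_inj: "inj_on (gal a) (Zring a)"
  by (metis gal_gal inj_onI)

lemma Zring_inv_ac: "inverse ac \<in> Zring a"
  using inv_ac Zring_mult Zring_int Zring_a by simp

lemma gal_inv_a: "gal a (inverse a) = inverse ac"
  using inv_a inv_ac gal_mult gal_int gal_ac Zring_int Zring_ac by simp

lemma gal_powi: "gal a (a powi m) = ac powi m"
proof (cases "m \<ge> 0")
  case True
  have "gal a (a ^ k) = ac ^ k" for k
    by (induction k) (simp_all add: gal_int[of 1, simplified] gal_mult Zring_a Zring_pow gal_a)
  thus ?thesis using True by (simp add: power_int_def)
next
  case False
  have "gal a (inverse a ^ k) = inverse ac ^ k" for k
  proof (induction k)
    case 0 thus ?case using gal_int[of 1] by simp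
  next
    case (Suc k)
    have "inverse a ^ k \<in> Zring a"
      by (induction k) (auto intro: Zring_mult Zring_inva simp: Zring_int[of 1, simplified])
    thus ?case using Suc Zring_inva gal_mult gal_inv_a by simp
  qed
  thus ?thesis using False by (simp add: power_int_def power_inverse)
qed

lemma ac_powi_Zring: "ac powi m \<in> Zring a"
  using gal_powi gal_Zring Zring_powi by metis

lemma ac_irr: "of_int p + of_int q * ac = 0 \<Longrightarrow> p = 0 \<and> q = 0"
  unfolding ac_form using coef_zero by fastforce

lemma abs_ac_ne1: "\<bar>ac\<bar> \<noteq> 1"
proof
  assume "\<bar>ac\<bar> = 1"
  hence "ac = 1 \<or> ac = -1" by auto
  thus False using ac_irr[of 1 "-1"] ac_irr[of 1 1] by auto
qed

lemma a_ac_sum: "a + ac = of_int t" unfolding ac_def by simp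

end

lemma sdp_mult: "(j, m) \<otimes>\<^bsub>sdp a J\<^esub> (k, l) = (j + a powi m * k, m + l)"
  by (simp add: sdp_def)
lemma sdp_carrier: "carrier (sdp a J) = J \<times> UNIV"
  by (simp add: sdp_def)
lemma sdp_one: "\<one>\<^bsub>sdp a J\<^esub> = (0, 0)"
  by (simp add: sdp_def)

context qu begin

lemma idl_mult: "is_ideal a J \<Longrightarrow> r \<in> Zring a \<Longrightarrow> x \<in> J \<Longrightarrow> r * x \<in> J"
  unfolding is_ideal_def by blast
lemma idl_add: "is_ideal a J \<Longrightarrow> x \<in> J \<Longrightarrow> y \<in> J \<Longrightarrow> x + y \<in> J"
  unfolding is_ideal_def by blast
lemma idl_neg: "is_ideal a J \<Longrightarrow> x \<in> J \<Longrightarrow> - x \<in> J"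
  unfolding is_ideal_def by blast
lemma idl_zero: "is_ideal a J \<Longrightarrow> 0 \<in> J"
  unfolding is_ideal_def by blast
lemma idl_sub: "is_ideal a J \<Longrightarrow> x \<in> J \<Longrightarrow> Zring a \<supseteq> J"
  unfolding is_ideal_def by blast
lemma idl_Zring: "is_ideal a J \<Longrightarrow> x \<in> J \<Longrightarrow> x \<in> Zring a"
  unfolding is_ideal_def by blast
lemma idl_powi: "is_ideal a J \<Longrightarrow> x \<in> J \<Longrightarrow> a powi m * x \<in> J"
  using idl_mult Zring_powi by blast
lemma idl_int: "is_ideal a J \<Longrightarrow> x \<in> J \<Longrightarrow> of_int k * x \<in> J"
  using idl_mult Zring_int by blast

lemma sdp_group: assumes "is_ideal a J" shows "group (sdp a J)"
proof (rule groupI)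
  fix x y assume "x \<in> carrier (sdp a J)" "y \<in> carrier (sdp a J)"
  thus "x \<otimes>\<^bsub>sdp a J\<^esub> y \<in> carrier (sdp a J)"
    using assms idl_add idl_powi by (cases x, cases y) (auto simp: sdp_mult sdp_carrier)
next
  show "\<one>\<^bsub>sdp a J\<^esub> \<in> carrier (sdp a J)" using idl_zero[OF assms] by (simp add: sdp_one sdp_carrier)
next
  fix x y z assume "x \<in> carrier (sdp a J)" "y \<in> carrier (sdp a J)" "z \<in> carrier (sdp a J)"
  thus "x \<otimes>\<^bsub>sdp a J\<^esub> y \<otimes>\<^bsub>sdp a J\<^esub> z = x \<otimes>\<^bsub>sdp a J\<^esub> (y \<otimes>\<^bsub>sdp a J\<^esub> z)"
    using a_nz by (cases x, cases y, cases z) (simp add: sdp_mult power_int_add algebra_simps)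
next
  fix x assume "x \<in> carrier (sdp a J)"
  thus "\<one>\<^bsub>sdp a J\<^esub> \<otimes>\<^bsub>sdp a J\<^esub> x = x" by (cases x) (simp add: sdp_one sdp_mult)
next
  fix x assume x: "x \<in> carrier (sdp a J)"
  obtain j m where jm: "x = (j, m)" by (cases x)
  have j: "j \<in> J" using x jm by (simp add: sdp_carrier)
  have "(- (a powi (-m) * j), -m) \<in> carrier (sdp a J)"
    using idl_neg[OF assms idl_powi[OF assms j]] by (simp add: sdp_carrier)
  moreover have "(- (a powi (-m) * j), -m) \<otimes>\<^bsub>sdp a J\<^esub> x = \<one>\<^bsub>sdp a J\<^esub>"
    by (simp add: jm sdp_mult sdp_one)
  ultimately show "\<exists>y\<in>carrier (sdp a J). y \<otimes>\<^bsub>sdp a J\<^esub> x = \<one>\<^bsub>sdp a J\<^esub>" by blast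
qed

lemma powi_ne1: "m \<noteq> 0 \<Longrightarrow> a powi m \<noteq> 1"
proof
  assume m: "m \<noteq> 0" and h: "a powi m = 1"
  have "\<bar>a\<bar> powi m = 1" using h by (metis abs_one power_int_abs)
  moreover have "\<bar>a\<bar> > 0" "\<bar>a\<bar> \<noteq> 1" using a_nz abs_a_ne1 by auto
  ultimately show False using m
    by (metis less_le power_int_strict_increasing power_int_0_right power_int_strict_decreasing
         not_less_iff_gr_or_eq linorder_neq_iff power_int_strict_antimono power_int_strict_mono)
qed

end

definition cc :: "('g, 'b) monoid_scheme \<Rightarrow> 'g set" where
  "cc G = {g \<in> carrier G. \<forall>h\<in>carrier G. \<forall>g'\<in>carrier G.
      h \<otimes>\<^bsub>G\<^esub> g = g' \<otimes>\<^bsub>G\<^esub> h \<longrightarrow> g \<otimes>\<^bsub>G\<^esub> g' = g' \<otimes>\<^bsub>G\<^esub> g}"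

lemma cc_iso:
  assumes G: "group G" and H: "group H" and iso: "f \<in> iso G H" and g: "g \<in> carrier G"
  shows "f g \<in> cc H \<longleftrightarrow> g \<in> cc G"
proof -
  have hom: "\<And>x y. x \<in> carrier G \<Longrightarrow> y \<in> carrier G \<Longrightarrow> f (x \<otimes>\<^bsub>G\<^esub> y) = f x \<otimes>\<^bsub>H\<^esub> f y"
    and cl: "\<And>x. x \<in> carrier G \<Longrightarrow> f x \<in> carrier H"
    and inj: "inj_on f (carrier G)" and surj: "f ` carrier G = carrier H"
    using iso unfolding iso_def hom_def bij_betw_def by auto
  have mc: "\<And>x y. x \<in> carrier G \<Longrightarrow> y \<in> carrier G \<Longrightarrow> x \<otimes>\<^bsub>G\<^esub> y \<in> carrier G"
    using G by (simp add: group.is_monoid monoid.m_closed)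
  have eqv: "\<And>x y. x \<in> carrier G \<Longrightarrow> y \<in> carrier G \<Longrightarrow> f x = f y \<longleftrightarrow> x = y"
    using inj by (meson inj_on_def)
  show ?thesis
  proof
    assume fg: "f g \<in> cc H"
    show "g \<in> cc G" unfolding cc_def
    proof (intro CollectI conjI ballI impI g)
      fix h g' assume hg: "h \<in> carrier G" "g' \<in> carrier G" "h \<otimes>\<^bsub>G\<^esub> g = g' \<otimes>\<^bsub>G\<^esub> h"
      hence "f h \<otimes>\<^bsub>H\<^esub> f g = f g' \<otimes>\<^bsub>H\<^esub> f h" using hom g by metis
      hence "f g \<otimes>\<^bsub>H\<^esub> f g' = f g' \<otimes>\<^bsub>H\<^esub> f g" using fg cl hg unfolding cc_def by blast
      hence "f (g \<otimes>\<^bsub>G\<^esub> g') = f (g' \<otimes>\<^bsub>G\<^esub> g)" using hom g hg by metis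
      thus "g \<otimes>\<^bsub>G\<^esub> g' = g' \<otimes>\<^bsub>G\<^esub> g" using eqv mc g hg by blast
    qed
  next
    assume gc: "g \<in> cc G"
    show "f g \<in> cc H" unfolding cc_def
    proof (intro CollectI conjI ballI impI cl g)
      fix h' g'' assume hg: "h' \<in> carrier H" "g'' \<in> carrier H" "h' \<otimes>\<^bsub>H\<^esub> f g = g'' \<otimes>\<^bsub>H\<^esub> h'"
      obtain h where h: "h \<in> carrier G" "h' = f h" using hg surj by blast
      obtain g' where g': "g' \<in> carrier G" "g'' = f g'" using hg surj by blast
      have "f (h \<otimes>\<^bsub>G\<^esub> g) = f (g' \<otimes>\<^bsub>G\<^esub> h)" using hom h g' g hg by metis
      hence "h \<otimes>\<^bsub>G\<^esub> g = g' \<otimes>\<^bsub>G\<^esub> h" using eqv mc g h g' by blast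
      hence "g \<otimes>\<^bsub>G\<^esub> g' = g' \<otimes>\<^bsub>G\<^esub> g" using gc h g' unfolding cc_def by blast
      thus "f g \<otimes>\<^bsub>H\<^esub> g'' = g'' \<otimes>\<^bsub>H\<^esub> f g" using hom g g' by metis
    qed
  qed
qed

context qu begin

lemma cc_sdp:
  assumes J: "nonzero_ideal a J" shows "cc (sdp a J) = J \<times> {0}"
proof (intro equalityI subsetI)
  have I: "is_ideal a J" using J unfolding nonzero_ideal_def by simp
  fix x assume x: "x \<in> cc (sdp a J)"
  obtain j m where jm: "x = (j, m)" by (cases x)
  have j: "j \<in> J" using x jm unfolding cc_def by (simp add: sdp_carrier)
  obtain k where k: "k \<in> J" "k \<noteq> 0" using J unfolding nonzero_ideal_def is_ideal_def by blast
  show "x \<in> J \<times> {0}"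
  proof (rule ccontr)
    assume "x \<notin> J \<times> {0}"
    hence m: "m \<noteq> 0" using jm j by simp
    define g' where "g' = (k + j - a powi m * k, m)"
    have g'c: "g' \<in> carrier (sdp a J)" unfolding g'_def sdp_carrier
      using idl_add[OF I idl_add[OF I k(1) j] idl_neg[OF I idl_powi[OF I k(1)]]] by simp
    have kc: "(k, 0) \<in> carrier (sdp a J)" using k by (simp add: sdp_carrier)
    have "(k, 0) \<otimes>\<^bsub>sdp a J\<^esub> x = g' \<otimes>\<^bsub>sdp a J\<^esub> (k, 0)"
      by (simp add: jm g'_def sdp_mult)
    hence "x \<otimes>\<^bsub>sdp a J\<^esub> g' = g' \<otimes>\<^bsub>sdp a J\<^esub> x"
      using x kc g'c unfolding cc_def by blast
    hence "j + a powi m * (k + j - a powi m * k) = k + j - a powi m * k + a powi m * j"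
      by (simp add: jm g'_def sdp_mult)
    hence "k * (1 - a powi m) * (1 - a powi m) = 0" by (simp add: algebra_simps)
    thus False using k(2) powi_ne1[OF m] by simp
  qed
next
  have I: "is_ideal a J" using J unfolding nonzero_ideal_def by simp
  fix x assume x: "x \<in> J \<times> {0::int}"
  then obtain j where jm: "x = (j, 0)" "j \<in> J" by auto
  show "x \<in> cc (sdp a J)" unfolding cc_def
  proof (intro CollectI conjI ballI impI)
    show "x \<in> carrier (sdp a J)" using jm by (simp add: sdp_carrier)
    fix h g' assume hg: "h \<in> carrier (sdp a J)" "g' \<in> carrier (sdp a J)"
       "h \<otimes>\<^bsub>sdp a J\<^esub> x = g' \<otimes>\<^bsub>sdp a J\<^esub> h"
    obtain k l where h: "h = (k, l)" by (cases h)
    obtain k' l' where g': "g' = (k', l')" by (cases g')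
    have "l' = 0" using hg(3) by (simp add: h g' jm sdp_mult)
    thus "x \<otimes>\<^bsub>sdp a J\<^esub> g' = g' \<otimes>\<^bsub>sdp a J\<^esub> x" by (simp add: g' jm sdp_mult)
  qed
qed

end

lemma additive_lin:
  assumes add: "\<And>x y. x \<in> J \<Longrightarrow> y \<in> J \<Longrightarrow> \<phi> (x + y) = \<phi> x + \<phi> y"
    and cl: "\<And>x y. x \<in> J \<Longrightarrow> y \<in> J \<Longrightarrow> x + y \<in> J"
    and z: "(0::real) \<in> J" and ng: "\<And>x. x \<in> J \<Longrightarrow> - x \<in> J"
    and y: "y \<in> J"
  shows "\<phi> (of_int k * y) = of_int k * (\<phi> y :: real)"
proof -
  have p0: "\<phi> 0 = 0" using add[OF z z] by simp
  have nat: "\<phi> (of_nat i * y) = of_nat i * \<phi> y \<and> of_nat i * y \<in> J" for i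
  proof (induction i)
    case 0 thus ?case using p0 z by simp
  next
    case (Suc i)
    have "of_nat (Suc i) * y = of_nat i * y + y" by (simp add: algebra_simps)
    thus ?case using Suc add[of "of_nat i * y" y] cl[of "of_nat i * y" y] y by (simp add: algebra_simps)
  qed
  have neg: "\<phi> (- x) = - \<phi> x" if "x \<in> J" for x
    using add[OF that ng[OF that]] p0 by simp
  show ?thesis
  proof (cases "k \<ge> 0")
    case True thus ?thesis using nat[of "nat k"] by simp
  next
    case False
    define X where "X = of_nat (nat (-k)) * y"
    have hX: "\<phi> X = of_nat (nat (-k)) * \<phi> y" "X \<in> J" using nat unfolding X_def by auto
    have "of_int k * y = - X" using False unfolding X_def by simp
    hence "\<phi> (of_int k * y) = - \<phi> X" using neg[OF hX(2)] by simp
    thus ?thesis using hX(1) False by simp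
  qed
qed

context qu begin

lemma fwd_struct:
  assumes qb: "qu b t' n'" and J: "nonzero_ideal a J" and K: "nonzero_ideal b K"
    and iso: "\<Phi> \<in> iso (sdp a J) (sdp b K)"
  shows "\<exists>\<phi> e. bij_betw \<phi> J K \<and> (\<forall>x\<in>J. \<forall>y\<in>J. \<phi> (x + y) = \<phi> x + \<phi> y) \<and>
     (e = 1 \<or> e = -1) \<and> (\<forall>j\<in>J. \<phi> (a * j) = b powi e * \<phi> j)"
proof -
  interpret B: qu b t' n' by (rule qb)
  have IJ: "is_ideal a J" using J unfolding nonzero_ideal_def by simp
  have IK: "is_ideal b K" using K unfolding nonzero_ideal_def by simp
  have G: "group (sdp a J)" by (rule sdp_group[OF IJ])
  have H: "group (sdp b K)" by (rule B.sdp_group[OF IK])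
  have hom: "\<And>x y. x \<in> carrier (sdp a J) \<Longrightarrow> y \<in> carrier (sdp a J) \<Longrightarrow>
      \<Phi> (x \<otimes>\<^bsub>sdp a J\<^esub> y) = \<Phi> x \<otimes>\<^bsub>sdp b K\<^esub> \<Phi> y"
    and cl: "\<And>x. x \<in> carrier (sdp a J) \<Longrightarrow> \<Phi> x \<in> carrier (sdp b K)"
    and inj: "inj_on \<Phi> (carrier (sdp a J))" and surj: "\<Phi> ` carrier (sdp a J) = carrier (sdp b K)"
    using iso unfolding iso_def hom_def bij_betw_def by auto
  define \<phi> where "\<phi> j = fst (\<Phi> (j, 0))" for j
  have PJ: "\<Phi> (j, 0) = (\<phi> j, 0) \<and> \<phi> j \<in> K" if "j \<in> J" for j
  proof -
    have "(j, 0) \<in> cc (sdp a J)" using cc_sdp[OF J] that by simp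
    hence "\<Phi> (j, 0) \<in> cc (sdp b K)" using cc_iso[OF G H iso] that by (simp add: sdp_carrier)
    thus ?thesis using B.cc_sdp[OF K] unfolding \<phi>_def by (cases "\<Phi> (j, 0)") auto
  qed
  have addp: "\<phi> (x + y) = \<phi> x + \<phi> y" if "x \<in> J" "y \<in> J" for x y
  proof -
    have "\<Phi> ((x, 0) \<otimes>\<^bsub>sdp a J\<^esub> (y, 0)) = \<Phi> (x, 0) \<otimes>\<^bsub>sdp b K\<^esub> \<Phi> (y, 0)"
      using hom that by (simp add: sdp_carrier)
    thus ?thesis using PJ that idl_add[OF IJ that] by (simp add: sdp_mult)
  qed
  have injp: "inj_on \<phi> J"
  proof (rule inj_onI)
    fix x y assume "x \<in> J" "y \<in> J" "\<phi> x = \<phi> y"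
    hence "\<Phi> (x, 0) = \<Phi> (y, 0)" using PJ by simp
    thus "x = y" using inj \<open>x \<in> J\<close> \<open>y \<in> J\<close> unfolding inj_on_def by (simp add: sdp_carrier)
  qed
  have surjp: "\<phi> ` J = K"
  proof (intro equalityI subsetI)
    fix y assume "y \<in> \<phi> ` J" thus "y \<in> K" using PJ by auto
  next
    fix k assume k: "k \<in> K"
    then obtain g where g: "g \<in> carrier (sdp a J)" "\<Phi> g = (k, 0)" using surj
      by (metis (no_types, lifting) SigmaI UNIV_I imageE sdp_carrier)
    have "(k, 0) \<in> cc (sdp b K)" using B.cc_sdp[OF K] k by simp
    hence "g \<in> cc (sdp a J)" using cc_iso[OF G H iso g(1)] g by simp
    then obtain j where j: "g = (j, 0)" "j \<in> J" using cc_sdp[OF J] by auto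
    thus "k \<in> \<phi> ` J" using PJ g by force
  qed
  define e where "e = snd (\<Phi> (0, 1))"
  define k0 where "k0 = fst (\<Phi> (0, 1))"
  have z: "0 \<in> J" by (rule idl_zero[OF IJ])
  have P01: "\<Phi> (0, 1) = (k0, e)" unfolding e_def k0_def by simp
  have sndm: "snd (\<Phi> (0, m)) = m * e" for m
  proof (induction m rule: int_induct[where k = 0])
    case base thus ?case using PJ[OF z] by simp
  next
    case (step1 i)
    have "\<Phi> ((0, i) \<otimes>\<^bsub>sdp a J\<^esub> (0, 1)) = \<Phi> (0, i) \<otimes>\<^bsub>sdp b K\<^esub> \<Phi> (0, 1)"
      using hom z by (simp add: sdp_carrier)
    hence "\<Phi> (0, i + 1) = \<Phi> (0, i) \<otimes>\<^bsub>sdp b K\<^esub> (k0, e)" by (simp add: sdp_mult P01)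
    thus ?case using step1 by (cases "\<Phi> (0, i)") (simp add: sdp_mult algebra_simps)
  next
    case (step2 i)
    have "\<Phi> ((0, i - 1) \<otimes>\<^bsub>sdp a J\<^esub> (0, 1)) = \<Phi> (0, i - 1) \<otimes>\<^bsub>sdp b K\<^esub> \<Phi> (0, 1)"
      using hom z by (simp add: sdp_carrier)
    hence "\<Phi> (0, i) = \<Phi> (0, i - 1) \<otimes>\<^bsub>sdp b K\<^esub> (k0, e)" by (simp add: sdp_mult P01)
    thus ?case using step2 by (cases "\<Phi> (0, i - 1)") (simp add: sdp_mult algebra_simps)
  qed
  have e: "e = 1 \<or> e = -1"
  proof -
    have "(0, 1) \<in> carrier (sdp b K)" using B.idl_zero[OF IK] by (simp add: sdp_carrier)
    then obtain g where g: "g \<in> carrier (sdp a J)" "\<Phi> g = (0, 1)" using surj by force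
    obtain j m where jm: "g = (j, m)" by (cases g)
    have j: "j \<in> J" using g jm by (simp add: sdp_carrier)
    have "\<Phi> ((j, 0) \<otimes>\<^bsub>sdp a J\<^esub> (0, m)) = \<Phi> (j, 0) \<otimes>\<^bsub>sdp b K\<^esub> \<Phi> (0, m)"
      using hom z j by (simp add: sdp_carrier)
    hence "\<Phi> g = (\<phi> j, 0) \<otimes>\<^bsub>sdp b K\<^esub> \<Phi> (0, m)" using PJ[OF j] by (simp add: sdp_mult jm)
    hence "snd (\<Phi> g) = m * e" using sndm[of m] by (cases "\<Phi> (0, m)") (simp add: sdp_mult)
    hence "m * e = 1" using g by simp
    thus ?thesis using zmult_eq_1_iff by auto
  qed
  have conj: "\<phi> (a * j) = b powi e * \<phi> j" if j: "j \<in> J" for j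
  proof -
    have aj: "a * j \<in> J" using idl_mult[OF IJ Zring_a j] .
    have "(0, 1) \<otimes>\<^bsub>sdp a J\<^esub> (j, 0) = (a * j, 0) \<otimes>\<^bsub>sdp a J\<^esub> (0, 1)" by (simp add: sdp_mult)
    hence "\<Phi> ((0, 1) \<otimes>\<^bsub>sdp a J\<^esub> (j, 0)) = \<Phi> ((a * j, 0) \<otimes>\<^bsub>sdp a J\<^esub> (0, 1))" by simp
    hence "\<Phi> (0, 1) \<otimes>\<^bsub>sdp b K\<^esub> \<Phi> (j, 0) = \<Phi> (a * j, 0) \<otimes>\<^bsub>sdp b K\<^esub> \<Phi> (0, 1)"
      using hom z j aj by (simp add: sdp_carrier)
    hence "(k0, e) \<otimes>\<^bsub>sdp b K\<^esub> (\<phi> j, 0) = (\<phi> (a * j), 0) \<otimes>\<^bsub>sdp b K\<^esub> (k0, e)"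
      using PJ[OF j] PJ[OF aj] P01 by simp
    thus ?thesis by (simp add: sdp_mult)
  qed
  show ?thesis
    apply (rule exI[of _ \<phi>], rule exI[of _ e])
    using injp surjp addp e conj unfolding bij_betw_def by blast
qed

end

context qu begin

lemma lin_Zring:
  fixes \<phi> :: "real \<Rightarrow> real"
  assumes I: "is_ideal a J" and add: "\<forall>x\<in>J. \<forall>y\<in>J. \<phi> (x + y) = \<phi> x + \<phi> y"
    and cj: "\<forall>j\<in>J. \<phi> (a * j) = c * \<phi> j" and y: "y \<in> J"
  shows "\<phi> ((of_int p + of_int q * a) * y) = (of_int p + of_int q * c) * \<phi> y"
proof -
  have lin: "\<phi> (of_int k * x) = of_int k * \<phi> x" if "x \<in> J" for k x
    by (rule additive_lin[where J = J]) (use add idl_add[OF I] idl_zero[OF I] idl_neg[OF I] that in auto)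
  have ay: "a * y \<in> J" using idl_mult[OF I Zring_a y] .
  have "(of_int p + of_int q * a) * y = of_int p * y + of_int q * (a * y)" by (simp add: algebra_simps)
  hence "\<phi> ((of_int p + of_int q * a) * y) = \<phi> (of_int p * y) + \<phi> (of_int q * (a * y))"
    using add idl_int[OF I y] idl_int[OF I ay] by simp
  also have "\<dots> = of_int p * \<phi> y + of_int q * (c * \<phi> y)" using lin y ay cj by simp
  finally show ?thesis by (simp add: algebra_simps)
qed

lemma add_zero:
  assumes I: "is_ideal a J" and add: "\<forall>x\<in>J. \<forall>y\<in>J. \<phi> (x + y) = \<phi> x + \<phi> y"
  shows "\<phi> 0 = (0::real)"
proof -
  have "\<phi> (0 + 0) = \<phi> 0 + \<phi> 0" using add idl_zero[OF I] by blast
  thus ?thesis by simp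
qed

lemma c_root:
  fixes \<phi> :: "real \<Rightarrow> real"
  assumes J: "nonzero_ideal a J" and inj: "inj_on \<phi> J"
    and add: "\<forall>x\<in>J. \<forall>y\<in>J. \<phi> (x + y) = \<phi> x + \<phi> y"
    and cj: "\<forall>j\<in>J. \<phi> (a * j) = c * \<phi> j"
  shows "c = a \<or> c = ac"
proof -
  have I: "is_ideal a J" using J unfolding nonzero_ideal_def by simp
  obtain x where x: "x \<in> J" "x \<noteq> 0" using J unfolding nonzero_ideal_def is_ideal_def by blast
  have "\<phi> x \<noteq> 0"
  proof
    assume "\<phi> x = 0"
    hence "\<phi> x = \<phi> 0" using add_zero[OF I add] by simp
    thus False using inj x idl_zero[OF I] unfolding inj_on_def by blast
  qed
  have ax: "a * x \<in> J" using idl_mult[OF I Zring_a x(1)] .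
  have "a * (a * x) = (a * a) * x" by (simp only: mult.assoc)
  also have "\<dots> = (of_int (-n) + of_int t * a) * x" unfolding asq by simp
  finally have "a * (a * x) = (of_int (-n) + of_int t * a) * x" .
  hence "\<phi> (a * (a * x)) = (of_int (-n) + of_int t * c) * \<phi> x"
    using lin_Zring[OF I add cj x(1), of "-n" t] by (simp only:)
  moreover have "\<phi> (a * (a * x)) = c * (c * \<phi> x)" using cj ax x by simp
  ultimately have "(c * c - (of_int (-n) + of_int t * c)) * \<phi> x = 0"
    by (simp add: algebra_simps)
  hence cc: "c * c = of_int (-n) + of_int t * c" using \<open>\<phi> x \<noteq> 0\<close> by simp
  have "(c - a) * (c - ac) = c * c - (a + ac) * c + a * ac" by (simp add: algebra_simps)
  also have "\<dots> = 0" unfolding cc a_ac a_ac_sum by simp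
  finally have "(c - a) * (c - ac) = 0" .
  thus ?thesis by simp
qed

lemma sc_a:
  fixes \<phi> :: "real \<Rightarrow> real"
  assumes I: "is_ideal a J" and bij: "bij_betw \<phi> J K"
    and add: "\<forall>x\<in>J. \<forall>y\<in>J. \<phi> (x + y) = \<phi> x + \<phi> y"
    and cj: "\<forall>j\<in>J. \<phi> (a * j) = a * \<phi> j"
  shows "same_class a K J"
  unfolding same_class_def
proof (intro exI[of _ "inv_into J \<phi>"] conjI ballI)
  show "bij_betw (inv_into J \<phi>) K J" using bij by (rule bij_betw_inv_into)
  have inj: "inj_on \<phi> J" and im: "\<phi> ` J = K" using bij unfolding bij_betw_def by auto
  fix x y assume x: "x \<in> K" and y: "y \<in> K"
  obtain j where j: "j \<in> J" "x = \<phi> j" using x im by auto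
  obtain j' where j': "j' \<in> J" "y = \<phi> j'" using y im by auto
  have "x + y = \<phi> (j + j')" using add j j' by simp
  thus "inv_into J \<phi> (x + y) = inv_into J \<phi> x + inv_into J \<phi> y"
    using inv_into_f_f[OF inj] j j' idl_add[OF I] by simp
next
  have inj: "inj_on \<phi> J" and im: "\<phi> ` J = K" using bij unfolding bij_betw_def by auto
  fix r x assume r: "r \<in> Zring a" and x: "x \<in> K"
  obtain j where j: "j \<in> J" "x = \<phi> j" using x im by auto
  obtain p q where rpq: "r = of_int p + of_int q * a" using r by (rule ZringE)
  have "\<phi> (r * j) = r * \<phi> j" using lin_Zring[OF I add cj j(1)] rpq by simp
  thus "inv_into J \<phi> (r * x) = r * inv_into J \<phi> x"
    using inv_into_f_f[OF inj] j idl_mult[OF I r j(1)] by metis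
qed

lemma sc_ac:
  fixes \<phi> :: "real \<Rightarrow> real"
  assumes I: "is_ideal a J" and bij: "bij_betw \<phi> J K"
    and add: "\<forall>x\<in>J. \<forall>y\<in>J. \<phi> (x + y) = \<phi> x + \<phi> y"
    and cj: "\<forall>j\<in>J. \<phi> (a * j) = ac * \<phi> j"
  shows "same_class a K (gal a ` J)"
  unfolding same_class_def
proof (intro exI[of _ "gal a \<circ> inv_into J \<phi>"] conjI ballI)
  have JZ: "J \<subseteq> Zring a" using I unfolding is_ideal_def by blast
  have "bij_betw (gal a) J (gal a ` J)" using gal_inj JZ
    by (meson inj_on_imp_bij_betw inj_on_subset)
  thus "bij_betw (gal a \<circ> inv_into J \<phi>) K (gal a ` J)"
    using bij by (metis bij_betw_inv_into bij_betw_trans)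
  have inj: "inj_on \<phi> J" and im: "\<phi> ` J = K" using bij unfolding bij_betw_def by auto
  fix x y assume x: "x \<in> K" and y: "y \<in> K"
  obtain j where j: "j \<in> J" "x = \<phi> j" using x im by auto
  obtain j' where j': "j' \<in> J" "y = \<phi> j'" using y im by auto
  have "x + y = \<phi> (j + j')" using add j j' by simp
  thus "(gal a \<circ> inv_into J \<phi>) (x + y) = (gal a \<circ> inv_into J \<phi>) x + (gal a \<circ> inv_into J \<phi>) y"
    using inv_into_f_f[OF inj] j j' idl_add[OF I] gal_add[of j j'] JZ by auto
next
  have JZ: "J \<subseteq> Zring a" using I unfolding is_ideal_def by blast
  have inj: "inj_on \<phi> J" and im: "\<phi> ` J = K" using bij unfolding bij_betw_def by auto
  fix r x assume r: "r \<in> Zring a" and x: "x \<in> K"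
  obtain j where j: "j \<in> J" "x = \<phi> j" using x im by auto
  have gr: "gal a r \<in> Zring a" using gal_Zring[OF r] .
  obtain p q where rpq: "gal a r = of_int p + of_int q * a" using gr by (rule ZringE)
  have "\<phi> (gal a r * j) = (of_int p + of_int q * ac) * \<phi> j" using lin_Zring[OF I add cj j(1)] rpq by simp
  also have "of_int p + of_int q * ac = r" using rpq gal_eq gal_gal[OF r] by metis
  finally have e: "\<phi> (gal a r * j) = r * x" using j by simp
  have grj: "gal a r * j \<in> J" using idl_mult[OF I gr j(1)] .
  have "inv_into J \<phi> (r * x) = gal a r * j" using inv_into_f_f[OF inj grj] e by simp
  thus "(gal a \<circ> inv_into J \<phi>) (r * x) = r * (gal a \<circ> inv_into J \<phi>) x"
    using inv_into_f_f[OF inj j(1)] j gal_mult[OF gr] JZ gal_gal[OF r] by auto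
qed

lemma part2_fwd:
  assumes qb: "qu b t' n'" and J: "nonzero_ideal a J" and K: "nonzero_ideal b K"
    and iso: "sdp a J \<cong> sdp b K"
  shows "((b = a \<or> b = inverse a) \<and> same_class a K J) \<or>
         ((b = gconj a \<or> b = inverse (gconj a)) \<and> same_class a K (gal a ` J))"
proof -
  interpret B: qu b t' n' by (rule qb)
  have I: "is_ideal a J" using J unfolding nonzero_ideal_def by simp
  obtain \<Phi> where "\<Phi> \<in> iso (sdp a J) (sdp b K)" using iso unfolding is_iso_def by blast
  then obtain \<phi> e where h: "bij_betw \<phi> J K" "\<forall>x\<in>J. \<forall>y\<in>J. \<phi> (x + y) = \<phi> x + \<phi> y"
     "e = 1 \<or> e = -1" "\<forall>j\<in>J. \<phi> (a * j) = b powi e * \<phi> j"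
    using fwd_struct[OF qb J K] by blast
  define c where "c = b powi e"
  have bc: "b = c \<or> b = inverse c" using h(3) unfolding c_def by (auto simp: power_int_minus)
  have "c = a \<or> c = ac" using c_root[OF J _ h(2)] h(1,4) unfolding c_def bij_betw_def by blast
  thus ?thesis
  proof
    assume "c = a"
    thus ?thesis using sc_a[OF I h(1,2)] h(4) bc unfolding c_def by auto
  next
    assume "c = ac"
    thus ?thesis using sc_ac[OF I h(1,2)] h(4) bc gconj_eq unfolding c_def by auto
  qed
qed

end

lemma iso_build:
  assumes bij: "bij_betw g K J" and add: "\<forall>x\<in>K. \<forall>y\<in>K. g (x + y) = g x + g y"
    and e: "e = 1 \<or> e = -1"
    and cj: "\<forall>m. \<forall>k\<in>K. g (b powi m * k) = a powi (e * m) * g k"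
    and cl: "\<forall>m. \<forall>k\<in>K. b powi m * k \<in> K"
  shows "(\<lambda>(k, m). (g k, e * m)) \<in> iso (sdp b K) (sdp a J)"
proof (rule isoI)
  have im: "g ` K = J" and inj: "inj_on g K" using bij unfolding bij_betw_def by auto
  show "(\<lambda>(k, m). (g k, e * m)) \<in> hom (sdp b K) (sdp a J)"
    unfolding hom_def
  proof (intro CollectI conjI ballI)
    show "(\<lambda>(k, m). (g k, e * m)) \<in> carrier (sdp b K) \<rightarrow> carrier (sdp a J)"
      using im by (auto simp: sdp_carrier)
    fix x y assume x: "x \<in> carrier (sdp b K)" and y: "y \<in> carrier (sdp b K)"
    obtain k m where km: "x = (k, m)" by (cases x)
    obtain l p where lp: "y = (l, p)" by (cases y)
    have k: "k \<in> K" and l: "l \<in> K" using x y km lp by (auto simp: sdp_carrier)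
    show "(case x \<otimes>\<^bsub>sdp b K\<^esub> y of (k, m) \<Rightarrow> (g k, e * m)) =
      (case x of (k, m) \<Rightarrow> (g k, e * m)) \<otimes>\<^bsub>sdp a J\<^esub> (case y of (k, m) \<Rightarrow> (g k, e * m))"
      using add k cl l cj by (simp add: km lp sdp_mult algebra_simps)
  qed
  show "bij_betw (\<lambda>(k, m). (g k, e * m)) (carrier (sdp b K)) (carrier (sdp a J))"
    unfolding bij_betw_def sdp_carrier
  proof
    show "inj_on (\<lambda>(k, m). (g k, e * m)) (K \<times> UNIV)"
      using inj e unfolding inj_on_def by auto
    show "(\<lambda>(k, m). (g k, e * m)) ` (K \<times> UNIV) = J \<times> UNIV"
    proof (intro equalityI subsetI)
      fix z assume "z \<in> (\<lambda>(k, m). (g k, e * m)) ` (K \<times> UNIV)" thus "z \<in> J \<times> UNIV" using im by auto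
    next
      fix z assume "z \<in> J \<times> (UNIV :: int set)"
      then obtain j m where z: "z = (j, m)" "j \<in> J" by auto
      then obtain k where "k \<in> K" "g k = j" using im by auto
      moreover have "e * (e * m) = m" using e by auto
      ultimately show "z \<in> (\<lambda>(k, m). (g k, e * m)) ` (K \<times> UNIV)" using z
        by (intro image_eqI[of _ _ "(k, e * m)"]) auto
    qed
  qed
qed

context qu begin

lemma part2_bwd:
  assumes qb: "qu b t' n'" and J: "nonzero_ideal a J" and K: "nonzero_ideal b K"
    and rhs: "((b = a \<or> b = inverse a) \<and> same_class a K J) \<or>
         ((b = gconj a \<or> b = inverse (gconj a)) \<and> same_class a K (gal a ` J))"
  shows "sdp a J \<cong> sdp b K"
proof -
  interpret B: qu b t' n' by (rule qb)
  have IJ: "is_ideal a J" using J unfolding nonzero_ideal_def by simp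
  have IK: "is_ideal b K" using K unfolding nonzero_ideal_def by simp
  have JZ: "J \<subseteq> Zring a" using IJ unfolding is_ideal_def by blast
  have clK: "\<forall>m. \<forall>k\<in>K. b powi m * k \<in> K" using B.idl_powi[OF IK] by blast
  have "\<exists>g e. bij_betw g K J \<and> (\<forall>x\<in>K. \<forall>y\<in>K. g (x + y) = g x + g y) \<and> (e = 1 \<or> e = -1) \<and>
        (\<forall>m. \<forall>k\<in>K. g (b powi m * k) = a powi (e * m) * g k)"
  proof (cases "(b = a \<or> b = inverse a) \<and> same_class a K J")
    case True
    then obtain f where f: "bij_betw f K J" "\<forall>x\<in>K. \<forall>y\<in>K. f (x + y) = f x + f y"
      "\<forall>r\<in>Zring a. \<forall>x\<in>K. f (r * x) = r * f x" unfolding same_class_def by blast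
    show ?thesis
    proof (cases "b = a")
      case True
      hence cj: "\<forall>m. \<forall>k\<in>K. f (b powi m * k) = a powi (1 * m) * f k" using f(3) Zring_powi by simp
      show ?thesis by (intro exI[of _ f] exI[of _ 1] conjI) (fact f(1), fact f(2), simp, fact cj)
    next
      case False
      hence b: "b = inverse a" using \<open>(b = a \<or> b = inverse a) \<and> same_class a K J\<close> by blast
      have "b powi m = a powi (- 1 * m)" for m by (simp add: b power_int_inverse power_int_minus)
      hence cj: "\<forall>m. \<forall>k\<in>K. f (b powi m * k) = a powi (- 1 * m) * f k" using f(3) Zring_powi by simp
      show ?thesis by (intro exI[of _ f] exI[of _ "-1"] conjI) (fact f(1), fact f(2), simp, fact cj)
    qed
  next
    case False
    have h0: "(b = gconj a \<or> b = inverse (gconj a)) \<and> same_class a K (gal a ` J)"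
      using rhs False by blast
    hence h: "(b = ac \<or> b = inverse ac) \<and> same_class a K (gal a ` J)" unfolding gconj_eq .
    then obtain f where f: "bij_betw f K (gal a ` J)" "\<forall>x\<in>K. \<forall>y\<in>K. f (x + y) = f x + f y"
      "\<forall>r\<in>Zring a. \<forall>x\<in>K. f (r * x) = r * f x" unfolding same_class_def by blast
    have gJZ: "gal a ` J \<subseteq> Zring a" using JZ gal_Zring by blast
    have gg0: "\<forall>x\<in>J. gal a (gal a x) = x" using gal_gal JZ by blast
    have gg: "gal a ` (gal a ` J) = J"
    proof -
      have "gal a ` (gal a ` J) = (\<lambda>x. gal a (gal a x)) ` J" by (rule image_image)
      also have "\<dots> = (\<lambda>x. x) ` J" by (rule image_cong) (use gg0 in auto)
      finally show ?thesis by simp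
    qed
    have bg: "bij_betw (gal a) (gal a ` J) J"
      using inj_on_imp_bij_betw[OF inj_on_subset[OF gal_inj gJZ]] unfolding gg .
    have fK: "f k \<in> Zring a" if "k \<in> K" for k using f(1) that gJZ unfolding bij_betw_def by blast
    have gpa: "gal a (ac powi m) = a powi m" for m by (simp only: gal_powi[symmetric] gal_gal[OF Zring_powi])
    have step: "gal a (f (ac powi m * k)) = a powi m * gal a (f k)" if "k \<in> K" for k m
      using f(3) ac_powi_Zring that gal_mult[OF ac_powi_Zring fK[OF that]] gpa by simp
    have bgf: "bij_betw (gal a \<circ> f) K J" using bij_betw_trans[OF f(1) bg] .
    have addg: "\<forall>x\<in>K. \<forall>y\<in>K. (gal a \<circ> f) (x + y) = (gal a \<circ> f) x + (gal a \<circ> f) y"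
    proof (intro ballI)
      fix x y assume "x \<in> K" "y \<in> K"
      thus "(gal a \<circ> f) (x + y) = (gal a \<circ> f) x + (gal a \<circ> f) y"
        using f(2) gal_add[OF fK fK] by simp
    qed
    show ?thesis
    proof (cases "b = ac")
      case True
      have cj: "\<forall>m. \<forall>k\<in>K. (gal a \<circ> f) (b powi m * k) = a powi (1 * m) * (gal a \<circ> f) k"
        using step True by simp
      show ?thesis by (intro exI[of _ "gal a \<circ> f"] exI[of _ 1] conjI) (fact bgf, fact addg, simp, fact cj)
    next
      case False
      hence b: "b = inverse ac" using h by blast
      have "b powi m = ac powi (- 1 * m)" for m by (simp add: b power_int_inverse power_int_minus)
      hence cj: "\<forall>m. \<forall>k\<in>K. (gal a \<circ> f) (b powi m * k) = a powi (- 1 * m) * (gal a \<circ> f) k"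
        using step by simp
      show ?thesis by (intro exI[of _ "gal a \<circ> f"] exI[of _ "-1"] conjI) (fact bgf, fact addg, simp, fact cj)
    qed
  qed
  then obtain g e where ge: "bij_betw g K J" "\<forall>x\<in>K. \<forall>y\<in>K. g (x + y) = g x + g y" "e = 1 \<or> e = -1"
        "\<forall>m. \<forall>k\<in>K. g (b powi m * k) = a powi (e * m) * g k" by blast
  have "sdp b K \<cong> sdp a J" by (rule is_isoI[OF iso_build[OF ge clK]])
  thus ?thesis by (rule group.iso_sym[OF B.sdp_group[OF IK]])
qed

end

definition II :: "real \<Rightarrow> int \<Rightarrow> int \<Rightarrow> real set" where
  "II a u v = {of_int p * of_int u + of_int q * (of_int v + a) | p q. True}"

lemma int_sub_gen:
  fixes S :: "int set"
  assumes cl: "\<forall>x\<in>S. \<forall>y\<in>S. x - y \<in> S" and N: "N \<in> S" "N \<noteq> 0"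
  shows "\<exists>w>0. w \<in> S \<and> (\<forall>q\<in>S. w dvd q)"
proof -
  have z: "0 \<in> S" using cl N by (metis diff_self)
  have neg: "- x \<in> S" if "x \<in> S" for x using cl z that by (metis diff_0)
  have addS: "x + y \<in> S" if "x \<in> S" "y \<in> S" for x y
    using cl that neg by (metis diff_minus_eq_add)
  have natm: "int k * x \<in> S" if "x \<in> S" for k x
    by (induction k) (simp_all add: z addS that algebra_simps)
  have intm: "k * x \<in> S" if "x \<in> S" for k x
  proof (cases "k \<ge> 0")
    case True thus ?thesis using natm[OF that, of "nat k"] by simp
  next
    case False thus ?thesis using neg[OF natm[OF that, of "nat (-k)"]] by simp
  qed
  define P where "P = {k::nat. k > 0 \<and> int k \<in> S}"
  have "nat \<bar>N\<bar> \<in> P" unfolding P_def using N neg by (cases "N \<ge> 0") auto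
  hence LP: "(LEAST k. k \<in> P) \<in> P" by (rule LeastI)
  define w where "w = int (LEAST k. k \<in> P)"
  have w: "w > 0" "w \<in> S" using LP unfolding w_def P_def by auto
  have "w dvd q" if q: "q \<in> S" for q
  proof (rule ccontr)
    assume nd: "\<not> w dvd q"
    have "q mod w = q - (q div w) * w" by (simp add: minus_div_mult_eq_mod)
    hence m: "q mod w \<in> S" using cl q intm[OF w(2)] by simp
    have "q mod w \<noteq> 0" using nd by (simp add: dvd_eq_mod_eq_0)
    moreover have "q mod w \<ge> 0" "q mod w < w" using w(1) by simp_all
    ultimately have "nat (q mod w) \<in> P" "nat (q mod w) < (LEAST k. k \<in> P)"
      using m unfolding P_def w_def by auto
    thus False using not_less_Least by blast
  qed
  thus ?thesis using w by blast
qed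

lemma img_scale_comp: "(*) (l::real) ` ((*) m ` S) = (*) (l * m) ` S"
  by (simp add: image_image mult.assoc)

lemma img_scale_one: "(*) (1::real) ` S = S" by simp

context qu begin

lemma II_Zring: "II a u v \<subseteq> Zring a"
proof
  fix x assume "x \<in> II a u v"
  then obtain p q where "x = of_int p * of_int u + of_int q * (of_int v + a)" unfolding II_def by blast
  hence "x = of_int (p * u + q * v) + of_int q * a" by (simp add: algebra_simps)
  thus "x \<in> Zring a" by (simp only: ZringI)
qed

lemma scale_iso:
  assumes I: "is_ideal a J" and l: "l \<noteq> 0"
  shows "sdp a J \<cong> sdp a ((*) l ` J)"
proof -
  have "(\<lambda>(k, m). ((*) l k, 1 * m)) \<in> iso (sdp a J) (sdp a ((*) l ` J))"
  proof (rule iso_build)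
    show "bij_betw ((*) l) J ((*) l ` J)" using l by (simp add: bij_betw_def inj_on_def)
    show "\<forall>x\<in>J. \<forall>y\<in>J. l * (x + y) = l * x + l * y" by (simp add: algebra_simps)
    show "(1::int) = 1 \<or> (1::int) = -1" by simp
    show "\<forall>m. \<forall>k\<in>J. l * (a powi m * k) = a powi (1 * m) * (l * k)" by simp
    show "\<forall>m. \<forall>k\<in>J. a powi m * k \<in> J" using idl_powi[OF I] by blast
  qed
  thus ?thesis by (rule is_isoI)
qed

lemma scale_ideal:
  assumes J: "nonzero_ideal a J" and l: "l \<noteq> 0" and sub: "(*) l ` J \<subseteq> Zring a"
  shows "nonzero_ideal a ((*) l ` J)"
proof -
  have I: "is_ideal a J" using J unfolding nonzero_ideal_def by simp
  obtain x where x: "x \<in> J" "x \<noteq> 0" using J unfolding nonzero_ideal_def is_ideal_def by blast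
  have "is_ideal a ((*) l ` J)" unfolding is_ideal_def
  proof (intro conjI ballI sub)
    show "0 \<in> (*) l ` J" using idl_zero[OF I] by force
  next
    fix x y assume "x \<in> (*) l ` J" "y \<in> (*) l ` J"
    then obtain j j' where "j \<in> J" "j' \<in> J" "x = l * j" "y = l * j'" by auto
    thus "x + y \<in> (*) l ` J" using idl_add[OF I] by (intro image_eqI[of _ _ "j + j'"]) (auto simp: algebra_simps)
  next
    fix x assume "x \<in> (*) l ` J"
    then obtain j where "j \<in> J" "x = l * j" by auto
    thus "- x \<in> (*) l ` J" using idl_neg[OF I] by (intro image_eqI[of _ _ "- j"]) auto
  next
    fix r x assume "r \<in> Zring a" "x \<in> (*) l ` J"
    then obtain j where j: "j \<in> J" "x = l * j" "r \<in> Zring a" by auto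
    have "r * x = l * (r * j)" using j by (simp add: mult.left_commute)
    moreover have "r * j \<in> J" using idl_mult[OF I j(3) j(1)] .
    ultimately show "r * x \<in> (*) l ` J" by blast
  qed
  moreover have "(*) l ` J \<noteq> {0}" using x l by (metis imageI mult_eq_0_iff singletonD)
  ultimately show ?thesis unfolding nonzero_ideal_def by simp
qed

lemma II_shift: "II a u (v + k * u) = II a u v"
proof (intro equalityI subsetI)
  fix x assume "x \<in> II a u (v + k * u)"
  then obtain p q where "x = of_int p * of_int u + of_int q * (of_int (v + k * u) + a)" unfolding II_def by blast
  hence "x = of_int (p + q * k) * of_int u + of_int q * (of_int v + a)" by (simp add: algebra_simps)
  thus "x \<in> II a u v" unfolding II_def by blast
next
  fix x assume "x \<in> II a u v"
  then obtain p q where "x = of_int p * of_int u + of_int q * (of_int v + a)" unfolding II_def by blast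
  hence "x = of_int (p - q * k) * of_int u + of_int q * (of_int (v + k * u) + a)" by (simp add: algebra_simps)
  thus "x \<in> II a u (v + k * u)" unfolding II_def by blast
qed

lemma II_abs: "II a (- s) w = II a s w"
proof (intro equalityI subsetI)
  fix x assume "x \<in> II a (- s) w"
  then obtain p q where "x = of_int p * of_int (- s) + of_int q * (of_int w + a)" unfolding II_def by blast
  hence "x = of_int (- p) * of_int s + of_int q * (of_int w + a)" by simp
  thus "x \<in> II a s w" unfolding II_def by blast
next
  fix x assume "x \<in> II a s w"
  then obtain p q where "x = of_int p * of_int s + of_int q * (of_int w + a)" unfolding II_def by blast
  hence "x = of_int (- p) * of_int (- s) + of_int q * (of_int w + a)" by simp
  thus "x \<in> II a (- s) w" unfolding II_def by blast
qed

lemma II_div: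
  assumes "is_ideal a (II a u v)" shows "u dvd (v * v + t * v + n)"
proof -
  have "of_int v + a \<in> II a u v" unfolding II_def by (intro CollectI exI[of _ 0] exI[of _ 1]) simp
  hence "a * (of_int v + a) \<in> II a u v" using idl_mult[OF assms Zring_a] by blast
  then obtain p q where pq: "a * (of_int v + a) = of_int p * of_int u + of_int q * (of_int v + a)"
    unfolding II_def by blast
  have "a * (of_int v + a) = of_int v * a + a * a" by (simp add: algebra_simps)
  also have "\<dots> = of_int (- n) + of_int (v + t) * a" unfolding asq by (simp add: algebra_simps)
  finally have "of_int (- n) + of_int (v + t) * a = of_int (p * u + q * v) + of_int q * a"
    using pq by (simp add: algebra_simps)
  hence e1: "- n = p * u + q * v" and e2: "q = v + t" using coef_eq by metis+
  have "- n = p * u + (v + t) * v" using e1 unfolding e2 .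
  hence "v * v + t * v + n = u * (- p)" by (simp add: algebra_simps)
  thus ?thesis by simp
qed

lemma II_conj:
  assumes u: "u \<noteq> 0" and s: "v * v + t * v + n = u * s"
  shows "II a s (- v - t) = (*) ((of_int v + ac) / of_int u) ` II a u v"
proof -
  have us: "(of_int v + a) * (of_int v + ac) = of_int u * of_int s"
  proof -
    have "(of_int v + a) * (of_int v + ac) = of_int v * of_int v + (a + ac) * of_int v + a * ac"
      by (simp add: algebra_simps)
    also have "\<dots> = of_int (v * v + t * v + n)" unfolding a_ac_sum a_ac by simp
    finally show ?thesis unfolding s by simp
  qed
  have key: "(of_int v + ac) / of_int u * (of_int p * of_int u + of_int q * (of_int v + a))
     = of_int q * of_int s + of_int (- p) * (of_int (- v - t) + a)" for p q
  proof -
    have "(of_int v + ac) / of_int u * (of_int p * of_int u + of_int q * (of_int v + a))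
       = of_int p * (of_int v + ac) + of_int q * ((of_int v + a) * (of_int v + ac)) / of_int u"
      using u by (simp add: field_simps)
    also have "\<dots> = of_int p * (of_int v + ac) + of_int q * of_int s" unfolding us using u by simp
    finally show ?thesis unfolding ac_def by (simp add: algebra_simps)
  qed
  show ?thesis
  proof (intro equalityI subsetI)
    fix x assume "x \<in> II a s (- v - t)"
    then obtain p q where x: "x = of_int p * of_int s + of_int q * (of_int (- v - t) + a)" unfolding II_def by blast
    have "x = (of_int v + ac) / of_int u * (of_int (- q) * of_int u + of_int p * (of_int v + a))"
      unfolding key x by simp
    moreover have "of_int (- q) * of_int u + of_int p * (of_int v + a) \<in> II a u v" unfolding II_def by blast
    ultimately show "x \<in> (*) ((of_int v + ac) / of_int u) ` II a u v" by blast
  next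
    fix x assume "x \<in> (*) ((of_int v + ac) / of_int u) ` II a u v"
    then obtain p q where x: "x = (of_int v + ac) / of_int u * (of_int p * of_int u + of_int q * (of_int v + a))"
      unfolding II_def by blast
    show "x \<in> II a s (- v - t)" unfolding x key II_def by blast
  qed
qed

end

context qu begin

lemma hnf:
  assumes J: "nonzero_ideal a J"
  shows "\<exists>w u v. w \<noteq> 0 \<and> u > 0 \<and> J = (*) (of_int w) ` II a u v"
proof -
  have I: "is_ideal a J" using J unfolding nonzero_ideal_def by simp
  have JZ: "J \<subseteq> Zring a" using I unfolding is_ideal_def by blast
  obtain x where x: "x \<in> J" "x \<noteq> 0" using J unfolding nonzero_ideal_def is_ideal_def by blast
  obtain p q where xpq: "x = of_int p + of_int q * a" using JZ x(1) by (meson ZringE subsetD)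
  define N where "N = p * p + p * q * t + q * q * n"
  have gx: "gal a x = of_int p + of_int q * ac" using xpq gal_eq by simp
  have "x * gal a x = (of_int p + of_int q * a) * (of_int p + of_int q * ac)"
    by (subst gx) (simp only: xpq)
  also have "\<dots> = of_int p * of_int p + of_int p * of_int q * (a + ac) + of_int q * of_int q * (a * ac)"
    by (simp add: algebra_simps)
  finally have "x * gal a x = of_int p * of_int p + of_int p * of_int q * (a + ac) + of_int q * of_int q * (a * ac)" .
  hence xN: "x * gal a x = of_int N" unfolding a_ac_sum a_ac N_def by simp
  have NJ: "of_int N \<in> J" using idl_mult[OF I gal_Zring[OF subsetD[OF JZ x(1)]] x(1)] xN
    by (simp add: mult.commute)
  have N0: "N \<noteq> 0" using xN x gal_nz[OF subsetD[OF JZ x(1)] x(2)] by (metis mult_eq_0_iff of_int_0_eq_iff)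
  define W where "W = {q. \<exists>p. of_int p + of_int q * a \<in> J}"
  define U where "U = {p. (of_int p :: real) \<in> J}"
  have clW: "\<forall>x\<in>W. \<forall>y\<in>W. x - y \<in> W"
  proof (intro ballI)
    fix q1 q2 assume "q1 \<in> W" "q2 \<in> W"
    then obtain p1 p2 where "of_int p1 + of_int q1 * a \<in> J" "of_int p2 + of_int q2 * a \<in> J" unfolding W_def by blast
    hence "(of_int p1 + of_int q1 * a) + - (of_int p2 + of_int q2 * a) \<in> J" using idl_add[OF I] idl_neg[OF I] by blast
    hence "of_int (p1 - p2) + of_int (q1 - q2) * a \<in> J" by (simp add: algebra_simps)
    thus "q1 - q2 \<in> W" unfolding W_def by blast
  qed
  have clU: "\<forall>x\<in>U. \<forall>y\<in>U. x - y \<in> U"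
  proof (intro ballI)
    fix p1 p2 assume "p1 \<in> U" "p2 \<in> U"
    hence "of_int p1 + - of_int p2 \<in> J" using idl_add[OF I] idl_neg[OF I] unfolding U_def by blast
    thus "p1 - p2 \<in> U" unfolding U_def by simp
  qed
  have NU: "N \<in> U" using NJ unfolding U_def by simp
  have UW: "u \<in> W" if "u \<in> U" for u
  proof -
    have "a * of_int u \<in> J" using idl_mult[OF I Zring_a] that unfolding U_def by blast
    hence "of_int 0 + of_int u * a \<in> J" by (simp add: mult.commute)
    thus ?thesis unfolding W_def by blast
  qed
  obtain w where w: "w > 0" "w \<in> W" "\<forall>q\<in>W. w dvd q" using int_sub_gen[OF clW UW[OF NU] N0] by blast
  obtain u0 where u0: "u0 > 0" "u0 \<in> U" "\<forall>q\<in>U. u0 dvd q" using int_sub_gen[OF clU NU N0] by blast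
  obtain v0 where v0: "of_int v0 + of_int w * a \<in> J" using w(2) unfolding W_def by blast
  have wu: "w dvd u0" using w(3) UW[OF u0(2)] by blast
  have "a * (of_int v0 + of_int w * a) \<in> J" using idl_mult[OF I Zring_a v0] .
  moreover have "a * (of_int v0 + of_int w * a) = of_int v0 * a + of_int w * (a * a)" by (simp add: algebra_simps)
  moreover have "\<dots> = of_int (- n * w) + of_int (v0 + w * t) * a" unfolding asq by (simp add: algebra_simps)
  ultimately have "v0 + w * t \<in> W" unfolding W_def by (metis (mono_tags, lifting) mem_Collect_eq)
  hence "w dvd v0 + w * t" using w(3) by blast
  hence wv: "w dvd v0" by (simp add: dvd_add_left_iff)
  obtain u where u: "u0 = w * u" using wu by blast
  obtain v where v: "v0 = w * v" using wv by blast
  have upos: "u > 0" using u u0(1) w(1) by (simp add: zero_less_mult_iff)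
  have "J = (*) (of_int w) ` II a u v"
  proof (intro equalityI subsetI)
    fix y assume y: "y \<in> J"
    then obtain p q where ypq: "y = of_int p + of_int q * a" using JZ by (meson ZringE subsetD)
    have "q \<in> W" using y ypq unfolding W_def by blast
    then obtain k where k: "q = w * k" using w(3) by blast
    have "y + - (of_int k * (of_int v0 + of_int w * a)) \<in> J"
      using idl_add[OF I y idl_neg[OF I idl_int[OF I v0]]] .
    moreover have "y + - (of_int k * (of_int v0 + of_int w * a)) = of_int (p - k * v0)"
      unfolding ypq k by (simp add: algebra_simps)
    ultimately have "p - k * v0 \<in> U" unfolding U_def by simp
    then obtain l where l: "p - k * v0 = u0 * l" using u0(3) by blast
    have "y = of_int w * (of_int l * of_int u + of_int k * (of_int v + a))"
    proof -
      have "p = u0 * l + k * v0" using l by simp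
      hence "of_int p = (of_int u0 * of_int l + of_int k * of_int v0 :: real)" by (metis of_int_add of_int_mult)
      thus ?thesis unfolding ypq k u v by (simp add: algebra_simps)
    qed
    thus "y \<in> (*) (of_int w) ` II a u v" unfolding II_def by blast
  next
    fix y assume "y \<in> (*) (of_int w) ` II a u v"
    then obtain p q where y: "y = of_int w * (of_int p * of_int u + of_int q * (of_int v + a))"
      unfolding II_def by blast
    have "y = of_int p * of_int u0 + of_int q * (of_int v0 + of_int w * a)"
      unfolding y u v by (simp add: algebra_simps)
    moreover have "of_int p * of_int u0 \<in> J" using idl_int[OF I] u0(2) unfolding U_def by blast
    moreover have "of_int q * (of_int v0 + of_int w * a) \<in> J" using idl_int[OF I v0] .
    ultimately show "y \<in> J" using idl_add[OF I] by simp
  qed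
  thus ?thesis using w(1) upos by (intro exI[of _ w] exI[of _ u] exI[of _ v]) simp
qed

end

context qu begin

definition BB :: int where "BB = \<bar>t * t - 4 * n\<bar>"

lemma sq_bound:
  fixes X u :: int assumes "- u \<le> X" "X \<le> u" shows "X * X \<le> u * u"
proof -
  have "0 \<le> (u - X) * (u + X)" using assms by (intro mult_nonneg_nonneg) auto
  thus ?thesis by (simp add: algebra_simps)
qed

lemma descent:
  assumes "nonzero_ideal a (II a u v)" "0 < u"
  shows "\<exists>u' v' l. 0 < u' \<and> u' \<le> BB \<and> 0 \<le> v' \<and> v' < u' \<and> l \<noteq> 0 \<and>
            II a u' v' = (*) l ` II a u v"
  using assms
proof (induction "nat u" arbitrary: u v rule: less_induct)
  case less
  have I: "is_ideal a (II a u v)" using less.prems(1) unfolding nonzero_ideal_def by simp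
  show ?case
  proof (cases "u \<le> BB")
    case True
    have "II a u (v + (- (v div u)) * u) = II a u v" by (rule II_shift)
    moreover have "v + (- (v div u)) * u = v mod u" by (simp add: minus_div_mult_eq_mod[symmetric] algebra_simps)
    ultimately have "II a u (v mod u) = (*) 1 ` II a u v" by simp
    thus ?thesis using True less.prems(2)
      by (intro exI[of _ u] exI[of _ "v mod u"] exI[of _ 1]) simp
  next
    case False
    define k where "k = - ((2 * v + t + u) div (2 * u))"
    define v1 where "v1 = v + k * u"
    have Iv1: "II a u v1 = II a u v" unfolding v1_def by (rule II_shift)
    have X: "2 * v1 + t = (2 * v + t + u) mod (2 * u) - u"
      unfolding v1_def k_def by (simp add: minus_div_mult_eq_mod[symmetric] algebra_simps)
    have m1: "0 \<le> (2 * v + t + u) mod (2 * u)" "(2 * v + t + u) mod (2 * u) < 2 * u"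
      using less.prems(2) by simp_all
    have Xb: "- u \<le> 2 * v1 + t" "2 * v1 + t \<le> u" unfolding X using m1 by simp_all
    define N1 where "N1 = v1 * v1 + t * v1 + n"
    have "u dvd N1" using II_div[of u v1] I Iv1 unfolding N1_def by simp
    then obtain s where s: "N1 = u * s" by blast
    have N1r: "(of_int v1 + a) * (of_int v1 + ac) = of_int N1"
    proof -
      have "(of_int v1 + a) * (of_int v1 + ac) = of_int v1 * of_int v1 + (a + ac) * of_int v1 + a * ac"
        by (simp add: algebra_simps)
      thus ?thesis unfolding a_ac_sum a_ac N1_def by simp
    qed
    have "of_int v1 + a \<noteq> 0" using coef_zero[of v1 1] by auto
    moreover have "of_int v1 + ac \<noteq> 0" using ac_irr[of v1 1] by auto
    ultimately have "N1 \<noteq> 0"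
    proof (intro notI)
      assume "of_int v1 + a \<noteq> 0" "of_int v1 + ac \<noteq> 0" "N1 = 0"
      hence "(of_int v1 + a) * (of_int v1 + ac) = 0" using N1r by simp
      thus False using \<open>of_int v1 + a \<noteq> 0\<close> \<open>of_int v1 + ac \<noteq> 0\<close> by simp
    qed
    hence s0: "s \<noteq> 0" using s by auto
    have "4 * N1 = (2 * v1 + t) * (2 * v1 + t) - (t * t - 4 * n)" unfolding N1_def by (simp add: algebra_simps)
    hence "\<bar>4 * N1\<bar> \<le> (2 * v1 + t) * (2 * v1 + t) + BB" unfolding BB_def using zero_le_square[of "2 * v1 + t"] by linarith
    also have "\<dots> \<le> u * u + BB" using sq_bound[OF Xb] by simp
    also have "\<dots> < u * (2 * u)"
    proof -
      have "u * 1 \<le> u * u" by (rule mult_left_mono) (use less.prems(2) in auto)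
      thus ?thesis using False by (simp add: algebra_simps)
    qed
    finally have "u * (4 * \<bar>s\<bar>) < u * (2 * u)" unfolding s using less.prems(2) by (simp add: abs_mult)
    hence "4 * \<bar>s\<bar> < 2 * u" using less.prems(2) by (simp add: mult_less_cancel_left_pos)
    hence slt: "\<bar>s\<bar> < u" "0 < \<bar>s\<bar>" using s0 by auto
    define l where "l = (of_int v1 + ac) / of_int u"
    have l0: "l \<noteq> 0" unfolding l_def using \<open>of_int v1 + ac \<noteq> 0\<close> less.prems(2) by simp
    have conj: "II a s (- v1 - t) = (*) l ` II a u v" unfolding l_def Iv1[symmetric]
      by (rule II_conj) (use less.prems(2) s N1_def in auto)
    have eqs: "II a \<bar>s\<bar> (- v1 - t) = (*) l ` II a u v"
      using conj II_abs[of s "- v1 - t"] by (cases "s \<ge> 0") auto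
    have nzs: "nonzero_ideal a (II a \<bar>s\<bar> (- v1 - t))"
      unfolding eqs by (rule scale_ideal[OF less.prems(1) l0]) (use eqs II_Zring[of "\<bar>s\<bar>" "- v1 - t"] in simp)
    have "nat \<bar>s\<bar> < nat u" using slt by simp
    then obtain u' v' l' where h: "0 < u'" "u' \<le> BB" "0 \<le> v'" "v' < u'" "l' \<noteq> 0"
      "II a u' v' = (*) l' ` II a \<bar>s\<bar> (- v1 - t)"
      using less.hyps[OF _ nzs slt(2)] by blast
    have "II a u' v' = (*) (l' * l) ` II a u v" unfolding h(6) eqs img_scale_comp ..
    thus ?thesis using h l0 by (intro exI[of _ u'] exI[of _ v'] exI[of _ "l' * l"]) simp
  qed
qed

lemma part3:
  "\<exists>F. finite F \<and> (\<forall>J\<in>F. nonzero_ideal a J) \<and>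
       (\<forall>J. nonzero_ideal a J \<longrightarrow> (\<exists>J'\<in>F. sdp a J \<cong> sdp a J'))"
proof -
  define F where "F = (\<lambda>(u, v). II a u v) ` {(u, v). 0 < u \<and> u \<le> BB \<and> 0 \<le> v \<and> v < u \<and> nonzero_ideal a (II a u v)}"
  have "{(u, v). 0 < u \<and> u \<le> BB \<and> 0 \<le> v \<and> v < u \<and> nonzero_ideal a (II a u v)} \<subseteq> {0..BB} \<times> {0..BB}"
    by auto
  hence "finite {(u, v). 0 < u \<and> u \<le> BB \<and> 0 \<le> v \<and> v < u \<and> nonzero_ideal a (II a u v)}"
    by (rule finite_subset) simp
  hence "finite F" unfolding F_def by (rule finite_imageI)
  moreover have "\<forall>J\<in>F. nonzero_ideal a J" unfolding F_def by auto
  moreover have "\<exists>J'\<in>F. sdp a J \<cong> sdp a J'" if J: "nonzero_ideal a J" for J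
  proof -
    obtain w u v where wuv: "w \<noteq> 0" "u > 0" "J = (*) (of_int w) ` II a u v" using hnf[OF J] by blast
    have II1: "II a u v = (*) (1 / of_int w) ` J" using wuv(1) unfolding wuv(3) img_scale_comp by simp
    have nzI: "nonzero_ideal a (II a u v)"
      unfolding II1 by (rule scale_ideal[OF J]) (use wuv(1) II1 II_Zring in auto)
    obtain u' v' l where h: "0 < u'" "u' \<le> BB" "0 \<le> v'" "v' < u'" "l \<noteq> 0" "II a u' v' = (*) l ` II a u v"
      using descent[OF nzI wuv(2)] by blast
    have eq: "II a u' v' = (*) (l * (1 / of_int w)) ` J" unfolding h(6) II1 img_scale_comp ..
    have l2: "l * (1 / of_int w) \<noteq> 0" using h(5) wuv(1) by simp
    have nz': "nonzero_ideal a (II a u' v')"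
      unfolding eq by (rule scale_ideal[OF J l2]) (use eq II_Zring[of u' v'] in simp)
    have "II a u' v' \<in> F" unfolding F_def using h nz' by blast
    moreover have "sdp a J \<cong> sdp a (II a u' v')"
      unfolding eq by (rule scale_iso[OF _ l2]) (use J in \<open>simp add: nonzero_ideal_def\<close>)
    ultimately show ?thesis by blast
  qed
  ultimately show ?thesis by blast
qed

end

definition linM :: "real \<Rightarrow> real \<Rightarrow> sol_pt \<Rightarrow> sol_pt" where
  "linM A1 A2 p = (A1 * fst p, A2 * fst (snd p), snd (snd p))"

definition aff :: "real \<Rightarrow> real \<Rightarrow> real \<Rightarrow> real \<Rightarrow> real \<Rightarrow> sol_pt \<Rightarrow> sol_pt" where
  "aff A1 A2 c1 c2 d p = linM A1 A2 p + (c1, c2, d)"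

definition good :: "real \<Rightarrow> real \<Rightarrow> real \<Rightarrow> bool" where
  "good A1 A2 d \<longleftrightarrow> A1\<^sup>2 * exp (2 * d) = 1 \<and> A2\<^sup>2 * exp (- 2 * d) = 1"

lemma aff_apply: "aff A1 A2 c1 c2 d (x, y, z) = (A1 * x + c1, A2 * y + c2, z + d)"
  by (simp add: aff_def linM_def)

lemma linear_linM: "linear (linM A1 A2)"
  by (rule linearI) (auto simp: linM_def algebra_simps)

lemma bl_linM: "bounded_linear (linM A1 A2)"
  using linear_linM linear_conv_bounded_linear by blast

lemma good_nz: "good A1 A2 d \<Longrightarrow> A1 \<noteq> 0 \<and> A2 \<noteq> 0"
  unfolding good_def by auto

lemma good_inv: "good A1 A2 d \<Longrightarrow> good (1 / A1) (1 / A2) (- d)"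
proof -
  assume g: "good A1 A2 d"
  hence nz: "A1 \<noteq> 0" "A2 \<noteq> 0" using good_nz by auto
  have e1: "exp (2 * d) = 1 / A1\<^sup>2" using g nz unfolding good_def by (simp add: field_simps)
  have e2: "exp (- 2 * d) = 1 / A2\<^sup>2" using g nz unfolding good_def by (simp add: field_simps)
  have x1: "exp (2 * - d) = A1\<^sup>2"
  proof -
    have "exp (2 * - d) = inverse (exp (2 * d))" by (simp add: exp_minus[symmetric])
    thus ?thesis using e1 by simp
  qed
  have x2: "exp (- 2 * - d) = A2\<^sup>2"
  proof -
    have "exp (- 2 * - d) = inverse (exp (- 2 * d))" by (simp add: exp_minus[symmetric])
    thus ?thesis using e2 by simp
  qed
  show ?thesis unfolding good_def x1 x2 using nz by (simp add: power_divide)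
qed

lemma aff_inv:
  assumes "A1 \<noteq> 0" "A2 \<noteq> 0"
  shows "aff (1 / A1) (1 / A2) (- (c1 / A1)) (- (c2 / A2)) (- d) (aff A1 A2 c1 c2 d p) = p"
  using assms by (cases p) (simp add: aff_apply field_simps)

lemma aff_inv2:
  assumes "A1 \<noteq> 0" "A2 \<noteq> 0"
  shows "aff A1 A2 c1 c2 d (aff (1 / A1) (1 / A2) (- (c1 / A1)) (- (c2 / A2)) (- d) p) = p"
  using assms by (cases p) (simp add: aff_apply field_simps)

lemma aff_length:
  assumes g: "g C1_differentiable_on {0..1}" and gd: "good A1 A2 d"
  shows "(aff A1 A2 c1 c2 d \<circ> g) C1_differentiable_on {0..1} \<and>
         sol_length (aff A1 A2 c1 c2 d \<circ> g) = sol_length g"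
proof -
  let ?f = "aff A1 A2 c1 c2 d"
  interpret L: bounded_linear "linM A1 A2" by (rule bl_linM)
  have gdiff: "g differentiable at t" and gvd: "(g has_vector_derivative vector_derivative g (at t)) (at t)"
    if "t \<in> {0..1}" for t
    using g that unfolding C1_differentiable_on_eq by (auto simp: vector_derivative_works)
  have fgvd: "((?f \<circ> g) has_vector_derivative linM A1 A2 (vector_derivative g (at t))) (at t)"
    if "t \<in> {0..1}" for t
  proof -
    have "((\<lambda>t. linM A1 A2 (g t)) has_vector_derivative linM A1 A2 (vector_derivative g (at t))) (at t)"
      by (rule L.has_vector_derivative[OF gvd[OF that]])
    hence "((\<lambda>t. linM A1 A2 (g t) + (c1, c2, d)) has_vector_derivative linM A1 A2 (vector_derivative g (at t))) (at t)"
      by (simp add: has_vector_derivative_add_const)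
    thus ?thesis by (simp add: aff_def o_def)
  qed
  have cont: "continuous_on {0..1} (\<lambda>t. vector_derivative g (at t))"
    using g unfolding C1_differentiable_on_eq by simp
  have C1: "(?f \<circ> g) C1_differentiable_on {0..1}"
    unfolding C1_differentiable_on_def
  proof (intro exI conjI ballI)
    show "continuous_on {0..1} (\<lambda>t. linM A1 A2 (vector_derivative g (at t)))"
      by (rule continuous_on_compose2[OF L.continuous_on[OF continuous_on_id] cont]) auto
    fix t :: real assume "t \<in> {0..1}"
    thus "((?f \<circ> g) has_vector_derivative linM A1 A2 (vector_derivative g (at t))) (at t)" by (rule fgvd)
  qed
  have vd1: "vector_derivative g (at t within {0..1}) = vector_derivative g (at t)" if "t \<in> {0..1}" for t
    using vector_derivative_at_within_ivl[OF gvd[OF that]] that by simp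
  have vd2: "vector_derivative (?f \<circ> g) (at t within {0..1}) = linM A1 A2 (vector_derivative g (at t))"
    if "t \<in> {0..1}" for t
    using vector_derivative_at_within_ivl[OF fgvd[OF that]] that by simp
  have e: "exp (2 * d) * A1\<^sup>2 = 1" "exp (- 2 * d) * A2\<^sup>2 = 1" using gd unfolding good_def by (simp_all add: mult.commute)
  have pt: "(let v = vector_derivative (?f \<circ> g) (at t within {0..1}); z = snd (snd ((?f \<circ> g) t)) in
     sqrt (exp (2 * z) * (fst v)\<^sup>2 + exp (- 2 * z) * (fst (snd v))\<^sup>2 + (snd (snd v))\<^sup>2)) =
     (let v = vector_derivative g (at t within {0..1}); z = snd (snd (g t)) in
     sqrt (exp (2 * z) * (fst v)\<^sup>2 + exp (- 2 * z) * (fst (snd v))\<^sup>2 + (snd (snd v))\<^sup>2))"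
    if "t \<in> {0..1}" for t
  proof -
    obtain v1 v2 v3 where v: "vector_derivative g (at t) = (v1, v2, v3)" by (cases "vector_derivative g (at t)") auto
    obtain x y z where xyz: "g t = (x, y, z)" by (cases "g t") auto
    have ee1: "exp (2 * (z + d)) = exp (2 * z) * exp (2 * d)"
      by (simp add: exp_add[symmetric] distrib_left)
    have ee2: "exp (- 2 * (z + d)) = exp (- 2 * z) * exp (- 2 * d)"
      by (simp add: exp_add[symmetric] distrib_left)
    have "exp (2 * (z + d)) * (A1 * v1)\<^sup>2 = exp (2 * z) * v1\<^sup>2 * (exp (2 * d) * A1\<^sup>2)"
      unfolding ee1 by (simp add: power_mult_distrib)
    moreover have "exp (- 2 * (z + d)) * (A2 * v2)\<^sup>2 = exp (- 2 * z) * v2\<^sup>2 * (exp (- 2 * d) * A2\<^sup>2)"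
      unfolding ee2 by (simp add: power_mult_distrib)
    ultimately show ?thesis using that vd1 vd2 v xyz e
      by (simp add: Let_def aff_apply linM_def o_def)
  qed
  have "sol_length (?f \<circ> g) = sol_length g"
    unfolding sol_length_def by (rule integral_cong) (use pt in simp)
  thus ?thesis using C1 by simp
qed

lemma aff_isometry:
  assumes gd: "good A1 A2 d"
  shows "sol_isometry (aff A1 A2 c1 c2 d)"
proof -
  let ?f = "aff A1 A2 c1 c2 d"
  have nz: "A1 \<noteq> 0" "A2 \<noteq> 0" using good_nz[OF gd] by auto
  let ?h = "aff (1 / A1) (1 / A2) (- (c1 / A1)) (- (c2 / A2)) (- d)"
  have gi: "good (1 / A1) (1 / A2) (- d)" by (rule good_inv[OF gd])
  have bij: "bij ?f"
    by (rule bij_betw_byWitness[where f' = ?h]) (simp_all add: aff_inv[OF nz] aff_inv2[OF nz])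
  have "sol_dist (?f p) (?f q) = sol_dist p q" for p q
  proof -
    have "{sol_length g | g. g C1_differentiable_on {0..1} \<and> g 0 = ?f p \<and> g 1 = ?f q} =
          {sol_length g | g. g C1_differentiable_on {0..1} \<and> g 0 = p \<and> g 1 = q}"
    proof (intro equalityI subsetI)
      fix r assume "r \<in> {sol_length g | g. g C1_differentiable_on {0..1} \<and> g 0 = ?f p \<and> g 1 = ?f q}"
      then obtain g where g: "r = sol_length g" "g C1_differentiable_on {0..1}" "g 0 = ?f p" "g 1 = ?f q" by blast
      have "(?h \<circ> g) C1_differentiable_on {0..1}" "sol_length (?h \<circ> g) = sol_length g"
        using aff_length[OF g(2) gi] by auto
      moreover have "(?h \<circ> g) 0 = p" "(?h \<circ> g) 1 = q" using g(3,4) aff_inv[OF nz] by simp_all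
      moreover have "r = sol_length (?h \<circ> g)" using g(1) calculation(2) by simp
      ultimately show "r \<in> {sol_length g | g. g C1_differentiable_on {0..1} \<and> g 0 = p \<and> g 1 = q}"
        by blast
    next
      fix r assume "r \<in> {sol_length g | g. g C1_differentiable_on {0..1} \<and> g 0 = p \<and> g 1 = q}"
      then obtain g where g: "r = sol_length g" "g C1_differentiable_on {0..1}" "g 0 = p" "g 1 = q" by blast
      have "(?f \<circ> g) C1_differentiable_on {0..1}" "sol_length (?f \<circ> g) = sol_length g"
        using aff_length[OF g(2) gd] by auto
      moreover have "(?f \<circ> g) 0 = ?f p" "(?f \<circ> g) 1 = ?f q" using g(3,4) by simp_all
      moreover have "r = sol_length (?f \<circ> g)" using g(1) calculation(2) by simp
      ultimately show "r \<in> {sol_length g | g. g C1_differentiable_on {0..1} \<and> g 0 = ?f p \<and> g 1 = ?f q}"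
        by blast
    qed
    thus ?thesis unfolding sol_dist_def by simp
  qed
  thus ?thesis unfolding sol_isometry_def using bij by blast
qed


lemma exp_int_ln: "(x::real) > 0 \<Longrightarrow> exp (of_int k * ln x) = x powi k"
  using exp_power_int[of "ln x" k] by simp

context qu begin

definition LL :: real where "LL = ln \<bar>a\<bar>"

lemma LL_nz: "LL \<noteq> 0"
  unfolding LL_def using a_nz abs_a_ne1 by simp

definition phi :: "real \<Rightarrow> int \<Rightarrow> sol_pt \<Rightarrow> sol_pt" where
  "phi j m = aff (a powi m) (ac powi m) j (gal a j) (- (of_int m * LL))"

lemma phi_apply: "phi j m (x, y, z) = (a powi m * x + j, ac powi m * y + gal a j, z - of_int m * LL)"
  by (simp add: phi_def aff_apply)

lemma abs_a_ac: "\<bar>a\<bar> * \<bar>ac\<bar> = 1"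
  using a_ac nsq by (auto simp: abs_mult[symmetric])

lemma good_phi: "good (a powi m) (ac powi m) (- (of_int m * LL))"
proof -
  have pa: "\<bar>a\<bar> > 0" using a_nz by simp
  have e1: "exp (- (of_int m * LL)) = \<bar>a\<bar> powi (- m)"
    using exp_int_ln[OF pa, of "- m"] unfolding LL_def by simp
  have e2: "exp (of_int m * LL) = \<bar>a\<bar> powi m"
    using exp_int_ln[OF pa, of m] unfolding LL_def by simp
  have "exp (2 * - (of_int m * LL)) = (exp (- (of_int m * LL)))\<^sup>2"
    by (simp add: exp_double[symmetric] power2_eq_square exp_add[symmetric])
  moreover have "exp (- 2 * - (of_int m * LL)) = (exp (of_int m * LL))\<^sup>2"
    by (simp add: power2_eq_square exp_add[symmetric])
  moreover have "(a powi m)\<^sup>2 = (\<bar>a\<bar> powi m)\<^sup>2" by (simp add: power_int_abs[symmetric])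
  moreover have "(ac powi m)\<^sup>2 = (\<bar>ac\<bar> powi m)\<^sup>2" by (simp add: power_int_abs[symmetric])
  moreover have "\<bar>a\<bar> powi m * \<bar>a\<bar> powi (- m) = 1" using pa by (simp add: power_int_minus)
  moreover have "\<bar>ac\<bar> powi m * \<bar>a\<bar> powi m = 1"
    using abs_a_ac by (simp add: power_int_mult_distrib[symmetric] mult.commute)
  ultimately show ?thesis unfolding good_def e1 e2
    by (simp add: power_mult_distrib[symmetric])
qed

lemma phi_isometry: "sol_isometry (phi j m)"
  unfolding phi_def by (rule aff_isometry[OF good_phi])

lemma phi_comp:
  assumes "j \<in> Zring a" "k \<in> Zring a"
  shows "phi j m \<circ> phi k l = phi (j + a powi m * k) (m + l)"
proof
  fix p :: sol_pt
  obtain x y z :: real where p: "p = (x, y, z)" by (cases p) auto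
  have g: "gal a (j + a powi m * k) = gal a j + ac powi m * gal a k"
    using assms gal_add[OF assms(1) Zring_mult[OF Zring_powi assms(2)]] gal_mult[OF Zring_powi assms(2)] gal_powi
    by simp
  show "(phi j m \<circ> phi k l) p = phi (j + a powi m * k) (m + l) p"
    unfolding p o_def phi_apply g using a_nz ac_nz
    by (simp add: power_int_add algebra_simps)
qed

lemma phi_inj: "phi j m = phi k l \<Longrightarrow> j = k \<and> m = l"
proof -
  assume "phi j m = phi k l"
  hence "phi j m (0, 0, 0) = phi k l (0, 0, 0)" by simp
  hence "j = k" "of_int m * LL = of_int l * LL" by (simp_all add: phi_apply)
  thus ?thesis using LL_nz by simp
qed

lemma phi_id: "phi 0 0 = id"
proof
  fix p :: sol_pt
  obtain x y z :: real where p: "p = (x, y, z)" by (cases p) auto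
  show "phi 0 0 p = id p" unfolding p using gal_int[of 0] by (simp add: phi_apply)
qed

definition Gam :: "real set \<Rightarrow> (sol_pt \<Rightarrow> sol_pt) set" where
  "Gam J = (\<lambda>(j, m). phi j m) ` (J \<times> UNIV)"

lemma Gam_monoid:
  assumes I: "is_ideal a J" shows "monoid (transf_group (Gam J))"
proof (rule monoidI)
  have JZ: "J \<subseteq> Zring a" using I unfolding is_ideal_def by blast
  fix x y assume "x \<in> carrier (transf_group (Gam J))" "y \<in> carrier (transf_group (Gam J))"
  then obtain j m k l where "x = phi j m" "y = phi k l" "j \<in> J" "k \<in> J"
    unfolding transf_group_def Gam_def by auto
  moreover have "j + a powi m * k \<in> J" using calculation idl_add[OF I] idl_powi[OF I] by blast
  moreover have "phi j m \<circ> phi k l = phi (j + a powi m * k) (m + l)"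
    using phi_comp calculation JZ by blast
  ultimately show "x \<otimes>\<^bsub>transf_group (Gam J)\<^esub> y \<in> carrier (transf_group (Gam J))"
    unfolding transf_group_def Gam_def by (auto intro!: image_eqI[of _ _ "(j + a powi m * k, m + l)"])
next
  show "\<one>\<^bsub>transf_group (Gam J)\<^esub> \<in> carrier (transf_group (Gam J))"
    unfolding transf_group_def Gam_def using phi_id idl_zero[OF I] by (auto intro!: image_eqI[of _ _ "(0, 0)"])
qed (auto simp: transf_group_def)

lemma Gam_iso:
  assumes I: "is_ideal a J" shows "(\<lambda>(j, m). phi j m) \<in> iso (sdp a J) (transf_group (Gam J))"
proof (rule isoI)
  have JZ: "J \<subseteq> Zring a" using I unfolding is_ideal_def by blast
  show "(\<lambda>(j, m). phi j m) \<in> hom (sdp a J) (transf_group (Gam J))"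
    unfolding hom_def
  proof (intro CollectI conjI ballI)
    show "(\<lambda>(j, m). phi j m) \<in> carrier (sdp a J) \<rightarrow> carrier (transf_group (Gam J))"
      by (auto simp: sdp_carrier transf_group_def Gam_def)
    fix x y assume xy: "x \<in> carrier (sdp a J)" "y \<in> carrier (sdp a J)"
    obtain j m where x: "x = (j, m)" by (cases x)
    obtain k l where y: "y = (k, l)" by (cases y)
    have "j \<in> Zring a" "k \<in> Zring a" using xy x y JZ by (auto simp: sdp_carrier)
    hence "phi j m \<circ> phi k l = phi (j + a powi m * k) (m + l)" by (rule phi_comp)
    thus "(case x \<otimes>\<^bsub>sdp a J\<^esub> y of (j, m) \<Rightarrow> phi j m) =
      (case x of (j, m) \<Rightarrow> phi j m) \<otimes>\<^bsub>transf_group (Gam J)\<^esub> (case y of (j, m) \<Rightarrow> phi j m)"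
      by (simp add: x y sdp_mult transf_group_def)
  qed
  show "bij_betw (\<lambda>(j, m). phi j m) (carrier (sdp a J)) (carrier (transf_group (Gam J)))"
    unfolding bij_betw_def sdp_carrier
  proof
    show "inj_on (\<lambda>(j, m). phi j m) (J \<times> UNIV)"
      by (rule inj_onI) (use phi_inj in auto)
    show "(\<lambda>(j, m). phi j m) ` (J \<times> UNIV) = carrier (transf_group (Gam J))"
      by (simp add: transf_group_def Gam_def)
  qed
qed

lemma Gam_free: "f \<in> Gam J \<Longrightarrow> f p = p \<Longrightarrow> f = id"
proof -
  assume f: "f \<in> Gam J" and fp: "f p = p"
  then obtain j m where jm: "f = phi j m" unfolding Gam_def by auto
  obtain x y z :: real where p: "p = (x, y, z)" by (cases p) auto
  have "of_int m * LL = 0" using fp unfolding jm p by (simp add: phi_apply)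
  hence m: "m = 0" using LL_nz by simp
  hence "j = 0" using fp unfolding jm p by (simp add: phi_apply)
  thus "f = id" using jm m phi_id by simp
qed

end

context qu begin

lemma fin_box: "finite {j \<in> Zring a. \<bar>j\<bar> \<le> B \<and> \<bar>gal a j\<bar> \<le> B}"
proof -
  define \<delta> where "\<delta> = \<bar>a - ac\<bar>"
  have d0: "\<delta> > 0" unfolding \<delta>_def using ac_ne by simp
  define Q where "Q = \<lceil>2 * B / \<delta>\<rceil>"
  define P where "P = \<lceil>B + of_int Q * \<bar>a\<bar>\<rceil>"
  have "{j \<in> Zring a. \<bar>j\<bar> \<le> B \<and> \<bar>gal a j\<bar> \<le> B} \<subseteq>
        (\<lambda>(p, q). of_int p + of_int q * a) ` ({-P..P} \<times> {-Q..Q})"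
  proof
    fix j assume j: "j \<in> {j \<in> Zring a. \<bar>j\<bar> \<le> B \<and> \<bar>gal a j\<bar> \<le> B}"
    then obtain p q where pq: "j = of_int p + of_int q * a" by (auto elim: ZringE)
    have gj: "gal a j = of_int p + of_int q * ac" using pq gal_eq by simp
    have "j - gal a j = of_int q * (a - ac)" using pq gj by (simp add: algebra_simps)
    hence "\<bar>of_int q\<bar> * \<delta> = \<bar>j - gal a j\<bar>" unfolding \<delta>_def by (simp add: abs_mult)
    also have "\<dots> \<le> 2 * B" using j by auto
    finally have "\<bar>of_int q\<bar> \<le> 2 * B / \<delta>" using d0 by (simp add: field_simps)
    also have "\<dots> \<le> of_int Q" unfolding Q_def by simp
    finally have qQ: "\<bar>q\<bar> \<le> Q" by linarith
    have "\<bar>of_int p\<bar> = \<bar>j - of_int q * a\<bar>" using pq by simp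
    also have "\<dots> \<le> \<bar>j\<bar> + \<bar>of_int q * a\<bar>" by (rule abs_triangle_ineq4)
    also have "\<dots> = \<bar>j\<bar> + \<bar>of_int q\<bar> * \<bar>a\<bar>" by (simp add: abs_mult)
    also have "\<dots> \<le> B + of_int Q * \<bar>a\<bar>" using j qQ by (intro add_mono mult_right_mono) auto
    also have "\<dots> \<le> of_int P" unfolding P_def by simp
    finally have pP: "\<bar>p\<bar> \<le> P" by linarith
    show "j \<in> (\<lambda>(p, q). of_int p + of_int q * a) ` ({-P..P} \<times> {-Q..Q})"
      using pP qQ pq by (intro image_eqI[of _ _ "(p, q)"]) auto
  qed
  thus ?thesis by (rule finite_subset) simp
qed

lemma comp_bound:
  assumes "norm (p :: sol_pt) \<le> R"
  shows "\<bar>fst p\<bar> \<le> R \<and> \<bar>fst (snd p)\<bar> \<le> R \<and> \<bar>snd (snd p)\<bar> \<le> R"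
proof -
  obtain x y z where p: "p = (x, y, z)" by (cases p) auto
  have "norm x \<le> norm p" "norm (y, z) \<le> norm p" unfolding p by (rule norm_fst_le, rule norm_snd_le)
  moreover have "norm y \<le> norm (y, z)" "norm z \<le> norm (y, z)" by (rule norm_fst_le, rule norm_snd_le)
  ultimately show ?thesis using assms unfolding p by auto
qed

lemma Gam_proper:
  assumes I: "is_ideal a J" and K: "compact K"
  shows "finite {f \<in> Gam J. f ` K \<inter> K \<noteq> {}}"
proof -
  have JZ: "J \<subseteq> Zring a" using I unfolding is_ideal_def by blast
  obtain R where R: "\<forall>p\<in>K. norm p \<le> R" using compact_imp_bounded[OF K] unfolding bounded_iff by blast
  define M where "M = \<lceil>2 * R / \<bar>LL\<bar>\<rceil>"
  define S where "S = (\<Union>m\<in>{-M..M}. (\<lambda>j. phi j m) `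
      {j \<in> Zring a. \<bar>j\<bar> \<le> R + (\<bar>a powi m\<bar> + \<bar>ac powi m\<bar>) * R \<and>
                     \<bar>gal a j\<bar> \<le> R + (\<bar>a powi m\<bar> + \<bar>ac powi m\<bar>) * R})"
  have "finite S" unfolding S_def by (intro finite_UN_I finite_atLeastAtMost_int finite_imageI fin_box)
  moreover have "{f \<in> Gam J. f ` K \<inter> K \<noteq> {}} \<subseteq> S"
  proof
    fix f assume f: "f \<in> {f \<in> Gam J. f ` K \<inter> K \<noteq> {}}"
    then obtain j m where jm: "f = phi j m" "j \<in> J" unfolding Gam_def by auto
    obtain p where p: "p \<in> K" "f p \<in> K" using f by auto
    obtain x y z where pxyz: "p = (x, y, z)" by (cases p) auto
    have b1: "\<bar>x\<bar> \<le> R" "\<bar>y\<bar> \<le> R" "\<bar>z\<bar> \<le> R" using comp_bound R p(1) unfolding pxyz by auto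
    have fp: "f p = (a powi m * x + j, ac powi m * y + gal a j, z - of_int m * LL)"
      unfolding jm pxyz phi_apply ..
    have b2: "\<bar>a powi m * x + j\<bar> \<le> R" "\<bar>ac powi m * y + gal a j\<bar> \<le> R" "\<bar>z - of_int m * LL\<bar> \<le> R"
      using comp_bound[of "f p" R] R p(2) unfolding fp by auto
    have "\<bar>of_int m\<bar> * \<bar>LL\<bar> \<le> 2 * R" using b1(3) b2(3) by (simp add: abs_mult[symmetric])
    hence "\<bar>of_int m\<bar> \<le> 2 * R / \<bar>LL\<bar>" using LL_nz by (simp add: field_simps)
    also have "\<dots> \<le> of_int M" unfolding M_def by simp
    finally have mM: "m \<in> {-M..M}" by auto
    have "\<bar>a powi m * x\<bar> \<le> \<bar>a powi m\<bar> * R" using b1(1) by (simp add: abs_mult mult_left_mono)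
    hence j1: "\<bar>j\<bar> \<le> R + (\<bar>a powi m\<bar> + \<bar>ac powi m\<bar>) * R" using b2(1) b1
      by (simp add: algebra_simps) (smt (verit) mult_nonneg_nonneg abs_ge_zero)
    have "\<bar>ac powi m * y\<bar> \<le> \<bar>ac powi m\<bar> * R" using b1(2) by (simp add: abs_mult mult_left_mono)
    hence j2: "\<bar>gal a j\<bar> \<le> R + (\<bar>a powi m\<bar> + \<bar>ac powi m\<bar>) * R" using b2(2) b1
      by (simp add: algebra_simps) (smt (verit) mult_nonneg_nonneg abs_ge_zero)
    show "f \<in> S" unfolding S_def using mM j1 j2 jm JZ by blast
  qed
  ultimately show ?thesis by (rule finite_subset[rotated])
qed

end

context qu begin

lemma frac_bound:
  fixes s r :: real and c x :: real
  shows "\<bar>x * ((s - of_int \<lfloor>s\<rfloor>) + (r - of_int \<lfloor>r\<rfloor>) * c)\<bar> \<le> \<bar>x\<bar> * (1 + \<bar>c\<bar>)"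
proof -
  have h1: "0 \<le> s - of_int \<lfloor>s\<rfloor>" "s - of_int \<lfloor>s\<rfloor> \<le> 1" by linarith+
  have h2: "0 \<le> r - of_int \<lfloor>r\<rfloor>" "r - of_int \<lfloor>r\<rfloor> \<le> 1" by linarith+
  have "\<bar>(s - of_int \<lfloor>s\<rfloor>) + (r - of_int \<lfloor>r\<rfloor>) * c\<bar> \<le> \<bar>s - of_int \<lfloor>s\<rfloor>\<bar> + \<bar>(r - of_int \<lfloor>r\<rfloor>) * c\<bar>"
    by (rule abs_triangle_ineq)
  also have "\<dots> \<le> 1 + 1 * \<bar>c\<bar>"
  proof -
    have "(r - of_int \<lfloor>r\<rfloor>) * \<bar>c\<bar> \<le> 1 * \<bar>c\<bar>" by (rule mult_right_mono) (use h2 in auto)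
    thus ?thesis using h1 h2 by (simp add: abs_mult)
  qed
  finally have "\<bar>(s - of_int \<lfloor>s\<rfloor>) + (r - of_int \<lfloor>r\<rfloor>) * c\<bar> \<le> 1 + \<bar>c\<bar>" by simp
  thus ?thesis by (simp add: abs_mult mult_left_mono)
qed

lemma covering:
  assumes J: "nonzero_ideal a J"
  shows "\<exists>R. \<forall>u v. \<exists>j\<in>J. \<bar>u - j\<bar> \<le> R \<and> \<bar>v - gal a j\<bar> \<le> R"
proof -
  have I: "is_ideal a J" using J unfolding nonzero_ideal_def by simp
  have JZ: "J \<subseteq> Zring a" using I unfolding is_ideal_def by blast
  obtain x0 where x0: "x0 \<in> J" "x0 \<noteq> 0" using J unfolding nonzero_ideal_def is_ideal_def by blast
  have x0Z: "x0 \<in> Zring a" using x0 JZ by blast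
  define y0 where "y0 = gal a x0"
  have y0: "y0 \<noteq> 0" unfolding y0_def using gal_nz[OF x0Z x0(2)] .
  define R where "R = \<bar>x0\<bar> * (1 + \<bar>a\<bar>) + \<bar>y0\<bar> * (1 + \<bar>ac\<bar>)"
  have "\<exists>j\<in>J. \<bar>u - j\<bar> \<le> R \<and> \<bar>v - gal a j\<bar> \<le> R" for u v
  proof -
    define r where "r = (u / x0 - v / y0) / (a - ac)"
    define s where "s = u / x0 - r * a"
    have dac: "a - ac \<noteq> 0" using ac_ne by simp
    have su: "s + r * a = u / x0" unfolding s_def by simp
    have sv: "s + r * ac = v / y0"
    proof -
      have "s + r * ac = u / x0 - r * (a - ac)" unfolding s_def by (simp add: algebra_simps)
      moreover have "r * (a - ac) = u / x0 - v / y0" unfolding r_def using dac by simp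
      ultimately show ?thesis by simp
    qed
    define p where "p = \<lfloor>s\<rfloor>"
    define q where "q = \<lfloor>r\<rfloor>"
    define j where "j = x0 * (of_int p + of_int q * a)"
    have jJ: "j \<in> J" unfolding j_def using idl_mult[OF I ZringI x0(1)] by (simp add: mult.commute)
    have gj: "gal a j = y0 * (of_int p + of_int q * ac)"
      unfolding j_def y0_def using gal_mult[OF x0Z ZringI] gal_eq by simp
    have "u - j = x0 * ((s - of_int p) + (r - of_int q) * a)"
      using su x0(2) unfolding j_def by (simp add: field_simps)
    hence e1: "\<bar>u - j\<bar> \<le> \<bar>x0\<bar> * (1 + \<bar>a\<bar>)" unfolding p_def q_def using frac_bound by metis
    have "v - gal a j = y0 * ((s - of_int p) + (r - of_int q) * ac)"
      using sv y0 unfolding gj by (simp add: field_simps)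
    hence e2: "\<bar>v - gal a j\<bar> \<le> \<bar>y0\<bar> * (1 + \<bar>ac\<bar>)" unfolding p_def q_def using frac_bound by metis
    have nn: "\<bar>x0\<bar> * (1 + \<bar>a\<bar>) \<ge> 0" "\<bar>y0\<bar> * (1 + \<bar>ac\<bar>) \<ge> 0" by simp_all
    have "\<bar>u - j\<bar> \<le> R" unfolding R_def using e1 nn by linarith
    moreover have "\<bar>v - gal a j\<bar> \<le> R" unfolding R_def using e2 nn by linarith
    ultimately show ?thesis using jJ by blast
  qed
  thus ?thesis by blast
qed

lemma Gam_cocompact:
  assumes J: "nonzero_ideal a J"
  shows "\<exists>K. compact K \<and> (\<Union>f\<in>Gam J. f ` K) = UNIV"
proof -
  have I: "is_ideal a J" using J unfolding nonzero_ideal_def by simp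
  have JZ: "J \<subseteq> Zring a" using I unfolding is_ideal_def by blast
  obtain R where R: "\<forall>u v. \<exists>j\<in>J. \<bar>u - j\<bar> \<le> R \<and> \<bar>v - gal a j\<bar> \<le> R" using covering[OF J] by blast
  define \<Lambda> where "\<Lambda> = \<bar>LL\<bar>"
  have L0: "\<Lambda> > 0" unfolding \<Lambda>_def using LL_nz by simp
  define K :: "sol_pt set" where "K = {-R..R} \<times> {-R..R} \<times> {0..\<Lambda>}"
  have "compact K" unfolding K_def by (intro compact_Times compact_Icc)
  moreover have "P \<in> (\<Union>f\<in>Gam J. f ` K)" for P
  proof -
    obtain X Y Z where P: "P = (X, Y, Z)" by (cases P) auto
    define k where "k = \<lfloor>Z / \<Lambda>\<rfloor>"
    define z0 where "z0 = Z - of_int k * \<Lambda>"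
    have z0: "0 \<le> z0" "z0 \<le> \<Lambda>"
    proof -
      have "of_int k \<le> Z / \<Lambda>" "Z / \<Lambda> < of_int k + 1" unfolding k_def by linarith+
      hence "of_int k * \<Lambda> \<le> Z" "Z < (of_int k + 1) * \<Lambda>" using L0 by (simp_all add: field_simps)
      thus "0 \<le> z0" "z0 \<le> \<Lambda>" unfolding z0_def by (simp_all add: algebra_simps)
    qed
    define m where "m = (if LL > 0 then - k else k)"
    have mL: "of_int m * LL = - (of_int k * \<Lambda>)" unfolding m_def \<Lambda>_def using LL_nz by auto
    obtain j' where j': "j' \<in> J" "\<bar>a powi (- m) * X - j'\<bar> \<le> R" "\<bar>ac powi (- m) * Y - gal a j'\<bar> \<le> R"
      using R by blast
    define j where "j = a powi m * j'"
    have jJ: "j \<in> J" unfolding j_def using idl_powi[OF I j'(1)] .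
    have j'Z: "j' \<in> Zring a" using JZ j'(1) by blast
    have "gal a j = gal a (a powi m) * gal a j'" unfolding j_def by (rule gal_mult[OF Zring_powi j'Z])
    hence gj: "gal a j = ac powi m * gal a j'" unfolding gal_powi .
    define x where "x = a powi (- m) * X - j'"
    define y where "y = ac powi (- m) * Y - gal a j'"
    have inK: "(x, y, z0) \<in> K" unfolding K_def x_def y_def using j' z0 by auto
    have am: "a powi m * a powi (- m) = 1" "ac powi m * ac powi (- m) = 1"
      using a_nz ac_nz by (simp_all add: power_int_minus)
    have "phi j m (x, y, z0) = P"
      unfolding phi_apply P x_def y_def gj unfolding j_def z0_def mL
      by (simp add: right_diff_distrib mult.assoc[symmetric] am)
    moreover have "phi j m \<in> Gam J" unfolding Gam_def using jJ by auto
    ultimately show ?thesis using inK by blast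
  qed
  ultimately show ?thesis by blast
qed

lemma part1:
  assumes J: "nonzero_ideal a J"
  shows "sol3_group (sdp a J)"
proof -
  have I: "is_ideal a J" using J unfolding nonzero_ideal_def by simp
  have G: "group (sdp a J)" by (rule sdp_group[OF I])
  have iso: "sdp a J \<cong> transf_group (Gam J)" using Gam_iso[OF I] by (rule is_isoI)
  have GG: "group (transf_group (Gam J))" using group.iso_imp_group[OF G iso Gam_monoid[OF I]] .
  have "\<forall>f\<in>Gam J. sol_isometry f" unfolding Gam_def using phi_isometry by auto
  moreover have "\<forall>f\<in>Gam J. \<forall>p. f p = p \<longrightarrow> f = id" using Gam_free by blast
  moreover have "\<forall>K. compact K \<longrightarrow> finite {f\<in>Gam J. f ` K \<inter> K \<noteq> {}}" using Gam_proper[OF I] by blast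
  moreover have "\<exists>K. compact K \<and> (\<Union>f\<in>Gam J. f ` K) = UNIV" by (rule Gam_cocompact[OF J])
  ultimately show ?thesis unfolding sol3_group_def using G GG iso by blast
qed

end

lemma qu_of: "quadratic_unit a \<Longrightarrow> \<exists>t n. qu a t n"
  unfolding quadratic_unit_def qu_def by blast

theorem theorem1:
  shows "(\<forall>a J. quadratic_unit a \<and> \<not> root_of_unity a \<and> nonzero_ideal a J
            \<longrightarrow> sol3_group (sdp a J))
    \<and> (\<forall>a b J K. quadratic_unit a \<and> \<not> root_of_unity a \<and> nonzero_ideal a J
            \<and> quadratic_unit b \<and> \<not> root_of_unity b \<and> nonzero_ideal b K \<longrightarrow>
          (sdp a J \<cong> sdp b K \<longleftrightarrow>
             ((b = a \<or> b = inverse a) \<and> same_class a K J) \<or>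
             ((b = gconj a \<or> b = inverse (gconj a)) \<and> same_class a K (gal a ` J))))
    \<and> (\<forall>a. quadratic_unit a \<and> \<not> root_of_unity a \<longrightarrow>
          (\<exists>F. finite F \<and> (\<forall>J\<in>F. nonzero_ideal a J) \<and>
               (\<forall>J. nonzero_ideal a J \<longrightarrow> (\<exists>J'\<in>F. sdp a J \<cong> sdp a J'))))"
proof (intro conjI allI impI)
  fix a J assume h: "quadratic_unit a \<and> \<not> root_of_unity a \<and> nonzero_ideal a J"
  then obtain t n where "qu a t n" using qu_of by blast
  thus "sol3_group (sdp a J)" using qu.part1 h by blast
next
  fix a b J K assume h: "quadratic_unit a \<and> \<not> root_of_unity a \<and> nonzero_ideal a J
            \<and> quadratic_unit b \<and> \<not> root_of_unity b \<and> nonzero_ideal b K"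
  obtain t n where qa: "qu a t n" using qu_of h by blast
  obtain t' n' where qb: "qu b t' n'" using qu_of h by blast
  show "sdp a J \<cong> sdp b K \<longleftrightarrow>
             ((b = a \<or> b = inverse a) \<and> same_class a K J) \<or>
             ((b = gconj a \<or> b = inverse (gconj a)) \<and> same_class a K (gal a ` J))"
    using qu.part2_fwd[OF qa qb] qu.part2_bwd[OF qa qb] h by blast
next
  fix a assume h: "quadratic_unit a \<and> \<not> root_of_unity a"
  then obtain t n where "qu a t n" using qu_of by blast
  thus "\<exists>F. finite F \<and> (\<forall>J\<in>F. nonzero_ideal a J) \<and>
               (\<forall>J. nonzero_ideal a J \<longrightarrow> (\<exists>J'\<in>F. sdp a J \<cong> sdp a J'))"
    by (rule qu.part3)
qed

end
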